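(* Let $Y=HX+Z$ where $X\sim U(-a/2,a/2)$, $Z\sim N(0,\sigma^2)$, and $H\ge0$ are independent, and the density of $H$ is a regular fading distribution. Let $i(X;Y,H)=\ln\frac{f(Y\mid H,X)}{f(Y\mid H)}$. Then there is a constant $0<\alpha\le1$ such that, for large enough $a/\sigma$: (1) $I(X;Y,H)=E\{i(X;Y,H)\}=E\left\{\tfrac12\ln\!\left(\tfrac{a^2H^2}{2\pi e\sigma^2}\right)\right\}+O((\sigma/a)^\alpha)$; (2) $\mathrm{Var}(i(X;Y,H))=\tfrac12+\mathrm{Var}\!\left(\tfrac12\ln\!\left(\tfrac{H^2}{2\pi e\sigma^2}\right)\right)+O((\sigma/a)^{\alpha/2})$; (3) $\rho_3=E\{|i(X;Y,H)-I(X;Y,H)|^3\}<\infty$.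
   Context: A PDF $f$ on $[0,\infty)$ is a regular fading distribution if there exists $\alpha'>0$ with $f(h)\propto h^{\alpha'-1}$ for all sufficiently small $h>0$. The fading satisfies $E\{H^2\}=1$ (standing assumption). *)

theory Defs
  imports "HOL-Probability.Probability"
begin

definition is_pdf_nonneg :: "(real \<Rightarrow> real) \<Rightarrow> bool" where
  "is_pdf_nonneg f \<longleftrightarrow> f \<in> borel_measurable lborel \<and> (\<forall>h. 0 \<le> f h) \<and>
     (\<forall>h<0. f h = 0) \<and> (\<integral>\<^sup>+ h. ennreal (f h) \<partial>lborel) = 1"

definition regular_fading :: "(real \<Rightarrow> real) \<Rightarrow> bool" where
  "regular_fading f \<longleftrightarrow> is_pdf_nonneg f \<and>
     (\<exists>\<alpha>'>0. \<exists>c>0. \<exists>\<delta>>0. \<forall>h. 0 < h \<and> h < \<delta> \<longrightarrow> f h = c * h powr (\<alpha>' - 1))"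

definition law_X :: "real \<Rightarrow> real measure" where
  "law_X a = uniform_measure lborel {-a/2<..<a/2}"

definition law_Z :: "real \<Rightarrow> real measure" where
  "law_Z \<sigma> = density lborel (\<lambda>z. ennreal (normal_density 0 \<sigma> z))"

definition law_H :: "(real \<Rightarrow> real) \<Rightarrow> real measure" where
  "law_H f = density lborel (\<lambda>h. ennreal (f h))"

definition joint_law :: "real \<Rightarrow> real \<Rightarrow> (real \<Rightarrow> real) \<Rightarrow> (real \<times> real \<times> real) measure" where
  "joint_law a \<sigma> f = law_X a \<Otimes>\<^sub>M (law_Z \<sigma> \<Otimes>\<^sub>M law_H f)"

definition cond_dens :: "real \<Rightarrow> real \<Rightarrow> real \<Rightarrow> real \<Rightarrow> real" where
  "cond_dens \<sigma> h x y = normal_density (h * x) \<sigma> y"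

definition out_dens :: "real \<Rightarrow> real \<Rightarrow> real \<Rightarrow> real \<Rightarrow> real" where
  "out_dens a \<sigma> h y = (\<integral>x. cond_dens \<sigma> h x y \<partial>law_X a)"

definition info_dens :: "real \<Rightarrow> real \<Rightarrow> real \<Rightarrow> real \<Rightarrow> real \<Rightarrow> real" where
  "info_dens a \<sigma> x y h = ln (cond_dens \<sigma> h x y / out_dens a \<sigma> h y)"

definition info_rv :: "real \<Rightarrow> real \<Rightarrow> real \<times> real \<times> real \<Rightarrow> real" where
  "info_rv a \<sigma> \<omega> = (case \<omega> of (x, z, h) \<Rightarrow> info_dens a \<sigma> x (h * x + z) h)"

end

theory Submission
  imports Defs
begin


lemma int_fst:
  fixes F :: "'a \<Rightarrow> real"
  assumes "prob_space M2" "integrable M1 F"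
  shows "integrable (M1 \<Otimes>\<^sub>M M2) (\<lambda>\<omega>. F (fst \<omega>))"
    "(\<integral>\<omega>. F (fst \<omega>) \<partial>(M1 \<Otimes>\<^sub>M M2)) = integral\<^sup>L M1 F"
proof -
  interpret prob_space M2 by fact
  have d: "distr (M1 \<Otimes>\<^sub>M M2) M1 fst = M1" by (rule distr_pair_fst)
  have [measurable]: "F \<in> borel_measurable M1" using assms(2) by auto
  show "integrable (M1 \<Otimes>\<^sub>M M2) (\<lambda>\<omega>. F (fst \<omega>))"
    using integrable_distr_eq[of fst "M1 \<Otimes>\<^sub>M M2" M1 F] d assms(2) by simp
  show "(\<integral>\<omega>. F (fst \<omega>) \<partial>(M1 \<Otimes>\<^sub>M M2)) = integral\<^sup>L M1 F"
    using integral_distr[of fst "M1 \<Otimes>\<^sub>M M2" M1 F] d by simp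
qed

lemma int_snd:
  fixes G :: "'b \<Rightarrow> real"
  assumes "prob_space M1" "prob_space M2" "integrable M2 G"
  shows "integrable (M1 \<Otimes>\<^sub>M M2) (\<lambda>\<omega>. G (snd \<omega>))"
    "(\<integral>\<omega>. G (snd \<omega>) \<partial>(M1 \<Otimes>\<^sub>M M2)) = integral\<^sup>L M2 G"
proof -
  interpret p1: prob_space M1 by fact
  interpret p2: prob_space M2 by fact
  interpret pair_sigma_finite M1 M2 ..
  have [measurable]: "G \<in> borel_measurable M2" using assms(3) by auto
  have i1: "integrable (M2 \<Otimes>\<^sub>M M1) (\<lambda>\<omega>. G (fst \<omega>))" "(\<integral>\<omega>. G (fst \<omega>) \<partial>(M2 \<Otimes>\<^sub>M M1)) = integral\<^sup>L M2 G"
    using int_fst[OF assms(1) assms(3)] by auto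
  have e: "(\<lambda>(x,y). (\<lambda>\<omega>. G (snd \<omega>)) (y,x)) = (\<lambda>\<omega>. G (fst \<omega>))" by auto
  show "integrable (M1 \<Otimes>\<^sub>M M2) (\<lambda>\<omega>. G (snd \<omega>))"
    using integrable_product_swap_iff[of "\<lambda>\<omega>. G (snd \<omega>)"] i1 unfolding e by simp
  show "(\<integral>\<omega>. G (snd \<omega>) \<partial>(M1 \<Otimes>\<^sub>M M2)) = integral\<^sup>L M2 G"
    using integral_product_swap[of "\<lambda>\<omega>. G (snd \<omega>)"] i1 unfolding e by simp
qed

lemma absmul_le: "abs (p*q) \<le> p\<^sup>2 + (q::real)\<^sup>2"
proof -
  have "0 \<le> (\<bar>p\<bar>-\<bar>q\<bar>)\<^sup>2" by simp
  hence "2*(\<bar>p\<bar>*\<bar>q\<bar>) \<le> p\<^sup>2+q\<^sup>2" by (simp add: power2_eq_square algebra_simps)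
  moreover have "0 \<le> \<bar>p\<bar>*\<bar>q\<bar>" by simp
  ultimately show ?thesis unfolding abs_mult by linarith
qed

lemma int_prod_zero:
  fixes F :: "'a \<Rightarrow> real" and G :: "'b \<Rightarrow> real"
  assumes "prob_space M1" "prob_space M2" "integrable M1 (\<lambda>x. (F x)\<^sup>2)" "integrable M2 (\<lambda>y. (G y)\<^sup>2)"
    "F \<in> borel_measurable M1" "G \<in> borel_measurable M2" "integral\<^sup>L M2 G = 0"
  shows "integrable (M1 \<Otimes>\<^sub>M M2) (\<lambda>\<omega>. F (fst \<omega>) * G (snd \<omega>))"
    "(\<integral>\<omega>. F (fst \<omega>) * G (snd \<omega>) \<partial>(M1 \<Otimes>\<^sub>M M2)) = 0"
proof -
  interpret p1: prob_space M1 by fact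
  interpret p2: prob_space M2 by fact
  interpret pair_sigma_finite M1 M2 ..
  have [measurable]: "F \<in> borel_measurable M1" "G \<in> borel_measurable M2" using assms by auto
  have i1: "integrable (M1 \<Otimes>\<^sub>M M2) (\<lambda>\<omega>. (F (fst \<omega>))\<^sup>2)" using int_fst[OF assms(2,3)] by auto
  have i2: "integrable (M1 \<Otimes>\<^sub>M M2) (\<lambda>\<omega>. (G (snd \<omega>))\<^sup>2)" using int_snd[OF assms(1,2,4)] by auto
  show I: "integrable (M1 \<Otimes>\<^sub>M M2) (\<lambda>\<omega>. F (fst \<omega>) * G (snd \<omega>))"
  proof (rule Bochner_Integration.integrable_bound[OF Bochner_Integration.integrable_add[OF i1 i2]])
    show "AE x in M1 \<Otimes>\<^sub>M M2. norm (F (fst x) * G (snd x)) \<le> norm ((F (fst x))\<^sup>2 + (G (snd x))\<^sup>2)"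
    proof
      fix x
      have "\<bar>F (fst x) * G (snd x)\<bar> \<le> (F (fst x))\<^sup>2 + (G (snd x))\<^sup>2"
        by (rule absmul_le)
      then show "norm (F (fst x) * G (snd x)) \<le> norm ((F (fst x))\<^sup>2 + (G (snd x))\<^sup>2)"
        by (simp add: abs_mult)
    qed
  qed simp
  have "(\<integral>\<omega>. F (fst \<omega>) * G (snd \<omega>) \<partial>(M1 \<Otimes>\<^sub>M M2)) = (\<integral>x. (\<integral>y. F x * G y \<partial>M2) \<partial>M1)"
    using integral_fst'[OF I] by simp
  also have "\<dots> = 0" using assms(7) by simp
  finally show "(\<integral>\<omega>. F (fst \<omega>) * G (snd \<omega>) \<partial>(M1 \<Otimes>\<^sub>M M2)) = 0" .
qed

lemma probX: "0 < a \<Longrightarrow> prob_space (law_X a)"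
  unfolding law_X_def by (rule prob_space_uniform_measure) auto

lemma probZ: "0 < \<sigma> \<Longrightarrow> prob_space (law_Z \<sigma>)"
  unfolding law_Z_def using prob_space_normal_density by auto

lemma probH: "is_pdf_nonneg f \<Longrightarrow> prob_space (law_H f)"
  unfolding law_H_def is_pdf_nonneg_def
  by (intro prob_spaceI) (auto simp: emeasure_density)

lemma law_X_density: assumes a: "0 < a"
  shows "law_X a = density lborel (\<lambda>x. ennreal (indicator {-a/2<..<a/2} x / a))"
proof -
  have e: "1 / ennreal a = ennreal (1/a)" using divide_ennreal[of 1 a] a by simp
  have m: "emeasure lborel {-a/2<..<a/2} = ennreal a" using a emeasure_lborel_Ioo[of "-(a/2)" "a/2"] by simp
  show ?thesis unfolding law_X_def uniform_measure_def m using a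
    by (intro density_cong) (auto simp: indicator_def e)
qed


lemma nd0: "normal_density m s y = normal_density 0 s (y - m)"
  by (simp add: normal_density_def power2_commute)

lemma nd_pos: "0 < s \<Longrightarrow> 0 < normal_density 0 s u"
  by (simp add: normal_density_def)

lemma nd_mono: assumes "0 < s" "\<bar>u\<bar> \<le> v" shows "normal_density 0 s v \<le> normal_density 0 s u"
proof -
  have "\<bar>u\<bar>^2 \<le> v^2" by (rule power_mono[OF assms(2) abs_ge_zero])
  hence "u\<^sup>2 \<le> v\<^sup>2" by simp
  hence "- (v - 0)\<^sup>2 / (2 * s\<^sup>2) \<le> - (u - 0)\<^sup>2 / (2 * s\<^sup>2)"
    by (intro divide_right_mono) auto
  hence "exp (- (v - 0)\<^sup>2 / (2 * s\<^sup>2)) \<le> exp (- (u - 0)\<^sup>2 / (2 * s\<^sup>2))" by simp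
  then show ?thesis unfolding normal_density_def by (rule mult_left_mono) simp
qed

definition Pint :: "real \<Rightarrow> real \<Rightarrow> real \<Rightarrow> real \<Rightarrow> real" where
  "Pint a \<sigma> h y = (\<integral>u. indicator {-a/2<..<a/2} ((y-u)/h) * normal_density 0 \<sigma> u \<partial>lborel)"

lemma Pint_integrable: "0 < \<sigma> \<Longrightarrow> integrable lborel (\<lambda>u. indicator {-a/2<..<a/2} ((y-u)/h) * normal_density 0 \<sigma> u)"
  apply (rule Bochner_Integration.integrable_bound[of _ "normal_density 0 \<sigma>"])
    apply (simp add: integrable_normal_density)
   apply measurable
  apply (auto simp: indicator_def normal_density_nonneg)
  done

lemma Pint_le1: "0 < \<sigma> \<Longrightarrow> Pint a \<sigma> h y \<le> 1"
proof -
  assume s: "0 < \<sigma>"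
  have "Pint a \<sigma> h y \<le> (\<integral>u. normal_density 0 \<sigma> u \<partial>lborel)"
    unfolding Pint_def
    by (rule integral_mono[OF Pint_integrable[OF s]]) (auto simp: integrable_normal_density indicator_def normal_density_nonneg s)
  then show ?thesis by (simp add: s)
qed

lemma out_dens_eq:
  assumes a: "0 < a" and h: "0 < h" and s: "0 < \<sigma>"
  shows "out_dens a \<sigma> h y = Pint a \<sigma> h y / (a * h)"
proof -
  let ?S = "{-a/2<..<a/2}"
  define F where "F = (\<lambda>u. indicator ?S ((y-u)/h) * normal_density 0 \<sigma> u)"
  have "out_dens a \<sigma> h y = (\<integral>x. indicator ?S x / a * normal_density (h*x) \<sigma> y \<partial>lborel)"
    unfolding out_dens_def cond_dens_def law_X_density[OF a]
  proof (subst integral_density)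
    show "(\<lambda>x. normal_density (h*x) \<sigma> y) \<in> borel_measurable (lborel)" unfolding normal_density_def by measurable
    show "AE x in lborel. 0 \<le> indicator ?S x / a" using a by (intro AE_I2) (auto simp: indicator_def)
  qed (auto simp: a)
  also have "\<dots> = (\<integral>x. F (y + (-h) * x) / a \<partial>lborel)"
  proof (rule Bochner_Integration.integral_cong[OF refl])
    fix x
    have e: "normal_density (h*x) \<sigma> y = normal_density 0 \<sigma> (y + (-h) * x)"
      by (simp add: normal_density_def)
    have "(y - (y + (-h) * x))/h = x" using h by simp
    then show "indicator ?S x / a * normal_density (h*x) \<sigma> y = F (y + (-h) * x) / a"
      unfolding F_def e by simp
  qed
  also have "\<dots> = (\<integral>x. F (y + (-h) * x) \<partial>lborel) / a"
    by (rule integral_divide_zero)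
  also have "(\<integral>x. F (y + (-h) * x) \<partial>lborel) = (\<integral>u. F u \<partial>lborel) / h"
  proof -
    have "(\<integral>u. F u \<partial>lborel) = \<bar>-h\<bar> *\<^sub>R (\<integral>x. F (y + (-h) * x) \<partial>lborel)"
      by (rule lborel_integral_real_affine) (use h in simp)
    then show ?thesis using h by simp
  qed
  also have "(\<integral>u. F u \<partial>lborel) = Pint a \<sigma> h y" unfolding F_def Pint_def ..
  finally show ?thesis using a h by simp
qed


lemma nd_second_moment: "0 < \<sigma> \<Longrightarrow> (\<integral>u. normal_density 0 \<sigma> u * u\<^sup>2 \<partial>lborel) = \<sigma>\<^sup>2"
  "0 < \<sigma> \<Longrightarrow> integrable lborel (\<lambda>u. normal_density 0 \<sigma> u * u\<^sup>2)"
proof -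
  assume s: "0 < \<sigma>"
  have "(\<integral>u. normal_density 0 \<sigma> u * (u - 0)^(2*1) \<partial>lborel) = fact (2 * 1) / ((2 / \<sigma>\<^sup>2)^1 * fact 1)"
    by (rule integral_normal_moment_even[OF s])
  then show "(\<integral>u. normal_density 0 \<sigma> u * u\<^sup>2 \<partial>lborel) = \<sigma>\<^sup>2" using s by simp
  show "integrable lborel (\<lambda>u. normal_density 0 \<sigma> u * u\<^sup>2)"
    using integrable_normal_moment[OF s, where \<mu>=0 and k=2] by simp
qed

lemma Pint_good:
  assumes s: "0 < \<sigma>" and m: "0 < m"
    and sub: "\<And>u. \<bar>u\<bar> \<le> m \<Longrightarrow> -a/2 < (y-u)/h \<and> (y-u)/h < a/2"
  shows "1 - \<sigma>\<^sup>2/m\<^sup>2 \<le> Pint a \<sigma> h y"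
proof -
  have i1: "integrable lborel (\<lambda>u. indicator {-m..m} u * normal_density 0 \<sigma> u)"
    apply (rule Bochner_Integration.integrable_bound[of _ "normal_density 0 \<sigma>"])
      apply (simp add: integrable_normal_density s)
     apply measurable
    apply (auto simp: indicator_def normal_density_nonneg)
    done
  have i2: "integrable lborel (\<lambda>u. normal_density 0 \<sigma> u * u\<^sup>2 / m\<^sup>2)"
    using nd_second_moment(2)[OF s] by simp
  have "1 = (\<integral>u. normal_density 0 \<sigma> u \<partial>lborel)" using s by simp
  also have "\<dots> \<le> (\<integral>u. indicator {-m..m} u * normal_density 0 \<sigma> u + normal_density 0 \<sigma> u * u\<^sup>2 / m\<^sup>2 \<partial>lborel)"
  proof (rule integral_mono)
    show "integrable lborel (normal_density 0 \<sigma>)" by (simp add: integrable_normal_density s)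
    show "integrable lborel (\<lambda>u. indicator {-m..m} u * normal_density 0 \<sigma> u + normal_density 0 \<sigma> u * u\<^sup>2 / m\<^sup>2)"
      using i1 i2 by simp
    fix u
    show "normal_density 0 \<sigma> u \<le> indicator {-m..m} u * normal_density 0 \<sigma> u + normal_density 0 \<sigma> u * u\<^sup>2 / m\<^sup>2"
    proof (cases "\<bar>u\<bar> \<le> m")
      case True
      have "0 \<le> normal_density 0 \<sigma> u * u\<^sup>2 / m\<^sup>2" by (simp add: normal_density_nonneg)
      moreover have "indicator {-m..m} u = (1::real)" using True by (simp add: indicator_def abs_le_iff)
      ultimately show ?thesis by simp
    next
      case False
      then have "m\<^sup>2 \<le> u\<^sup>2" using m by (metis abs_le_square_iff abs_of_pos less_imp_le not_le)
      then have "1 \<le> u\<^sup>2 / m\<^sup>2" using m by simp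
      then have "normal_density 0 \<sigma> u * 1 \<le> normal_density 0 \<sigma> u * (u\<^sup>2 / m\<^sup>2)"
        by (intro mult_left_mono) (auto simp: normal_density_nonneg)
      then show ?thesis using False by (simp add: indicator_def)
    qed
  qed
  also have "\<dots> = (\<integral>u. indicator {-m..m} u * normal_density 0 \<sigma> u \<partial>lborel) + \<sigma>\<^sup>2/m\<^sup>2"
    using i1 i2 nd_second_moment[OF s] by simp
  also have "(\<integral>u. indicator {-m..m} u * normal_density 0 \<sigma> u \<partial>lborel) \<le> Pint a \<sigma> h y"
    unfolding Pint_def
  proof (rule integral_mono[OF i1 Pint_integrable[OF s]])
    fix u show "indicator {-m..m} u * normal_density 0 \<sigma> u \<le> indicator {-a/2<..<a/2} ((y-u)/h) * normal_density 0 \<sigma> u"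
      using sub[of u] by (cases "\<bar>u\<bar> \<le> m") (auto simp: indicator_def normal_density_nonneg abs_le_iff)
  qed
  finally show ?thesis by simp
qed

lemma Pint_lower1:
  assumes a: "0 < a" and h: "0 < h" and s: "0 < \<sigma>" and x0: "-a/2 < x0" "x0 < a/2"
  shows "min (h*a/2) \<sigma> * normal_density 0 \<sigma> (\<bar>z\<bar> + \<sigma>) \<le> Pint a \<sigma> h (h*x0 + z)"
proof -
  define L where "L = min (h*a/2) \<sigma>"
  define J where "J = (if 0 \<le> x0 then {z<..<z+L} else {z-L<..<z})"
  have L: "0 < L" "L \<le> \<sigma>" "L / h \<le> a/2" using a h s by (auto simp: L_def min_def field_simps)
  have mJ: "measure lborel J = L" using L by (auto simp: J_def)
  have "integrable lborel (indicator J :: real \<Rightarrow> real)"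
    unfolding J_def using L by (auto intro!: integrable_real_indicator simp: emeasure_lborel_Ioo)
  then have iJ: "integrable lborel (\<lambda>u. indicator J u * normal_density 0 \<sigma> (\<bar>z\<bar> + \<sigma>))"
    by simp
  have "min (h*a/2) \<sigma> * normal_density 0 \<sigma> (\<bar>z\<bar> + \<sigma>) = (\<integral>u. indicator J u * normal_density 0 \<sigma> (\<bar>z\<bar> + \<sigma>) \<partial>lborel)"
    using mJ by (simp add: L_def)
  also have "\<dots> \<le> Pint a \<sigma> h (h*x0 + z)"
    unfolding Pint_def
  proof (rule integral_mono[OF iJ Pint_integrable[OF s]])
    fix u
    show "indicator J u * normal_density 0 \<sigma> (\<bar>z\<bar> + \<sigma>) \<le> indicator {-a/2<..<a/2} ((h*x0 + z-u)/h) * normal_density 0 \<sigma> u"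
    proof (cases "u \<in> J")
      case False then show ?thesis by (simp add: normal_density_nonneg)
    next
      case True
      have e: "(h*x0 + z-u)/h = x0 - (u - z)/h" using h by (simp add: field_simps)
      have "\<bar>u\<bar> \<le> \<bar>z\<bar> + \<sigma>"
        using True L by (auto simp: J_def split: if_splits)
      then have nd: "normal_density 0 \<sigma> (\<bar>z\<bar> + \<sigma>) \<le> normal_density 0 \<sigma> u" by (rule nd_mono[OF s])
      have "-a/2 < (h*x0 + z-u)/h \<and> (h*x0 + z-u)/h < a/2"
      proof (cases "0 \<le> x0")
        case True
        with \<open>u \<in> J\<close> have u: "z < u" "u < z + L" by (auto simp: J_def)
        have "0 < (u - z)/h" using u h by simp
        moreover have "(u - z)/h < L/h" using u h by (simp add: divide_strict_right_mono)
        ultimately show ?thesis unfolding e using L x0 True by linarith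
      next
        case False
        with \<open>u \<in> J\<close> have u: "z - L < u" "u < z" by (auto simp: J_def)
        have "(u - z)/h < 0" using u h by (simp add: divide_neg_pos)
        moreover have "-(L/h) < (u - z)/h" using divide_strict_right_mono[of "-L" "u-z" h] u h by simp
        ultimately show ?thesis unfolding e using L x0 False by linarith
      qed
      then show ?thesis using True nd by (simp add: indicator_def)
    qed
  qed
  finally show ?thesis .
qed


lemma powr_int0:
  fixes p e :: real assumes p: "p > -1" and e: "e \<ge> 0"
  shows "has_bochner_integral lborel (\<lambda>h. indicator {0..e} h * h powr p) (e powr (p+1)/(p+1))"
proof -
  have hi: "((\<lambda>h. indicator {0..e} h * h powr p) has_integral (e powr (p+1)/(p+1))) UNIV"
  proof -
    have "(\<lambda>h. indicator {0..e} h * h powr p) = (\<lambda>x. if x \<in> {0..e} then x powr p else 0)"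
      by (auto simp: indicator_def)
    then show ?thesis using has_integral_restrict_UNIV[of "{0..e}" "\<lambda>h. h powr p"] has_integral_powr_from_0[OF p e]
      by simp
  qed
  have "integral\<^sup>N lborel (\<lambda>h. indicator {0..e} h * h powr p) = e powr (p+1)/(p+1)"
    by (rule nn_integral_has_integral_lborel[OF _ _ hi]) auto
  then show ?thesis
    using p by (intro has_bochner_integral_nn_integral) auto
qed

lemma pdf_meas: "is_pdf_nonneg f \<Longrightarrow> f \<in> borel_measurable borel"
  by (simp add: is_pdf_nonneg_def)

lemma H_integrable_iff:
  assumes "is_pdf_nonneg f" "F \<in> borel_measurable borel"
  shows "integrable (law_H f) F \<longleftrightarrow> integrable lborel (\<lambda>h. f h * F h)"
  unfolding law_H_def using assms
  by (subst integrable_density) (auto simp: is_pdf_nonneg_def)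

lemma H_integral:
  assumes "is_pdf_nonneg f" "F \<in> borel_measurable borel"
  shows "integral\<^sup>L (law_H f) F = (\<integral>h. f h * F h \<partial>lborel)"
  unfolding law_H_def using assms
  by (subst integral_density) (auto simp: is_pdf_nonneg_def)

lemma f_integrable: "is_pdf_nonneg f \<Longrightarrow> integrable lborel f"
  unfolding is_pdf_nonneg_def
  by (intro integrableI_nonneg) auto

lemma ln_le_16sq: fixes h :: real assumes "1 \<le> h" shows "(ln h)^4 \<le> 16 * h\<^sup>2"
proof -
  have sh: "0 < sqrt h" using assms by simp
  have "ln h = 2 * ln (sqrt h)" using assms by (simp add: ln_sqrt)
  also have "\<dots> \<le> 2 * sqrt h" using ln_le_minus_one[OF sh] by simp
  finally have "ln h \<le> 2 * sqrt h" .
  moreover have "0 \<le> ln h" using assms by simp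
  ultimately have "(ln h)^4 \<le> (2 * sqrt h)^4" by (intro power_mono) auto
  also have "(2 * sqrt h)^4 = 16 * h\<^sup>2"
  proof -
    have "(2 * sqrt h)^4 = 16 * ((sqrt h)^2)^2" by (simp add: power_mult_distrib flip: power_mult)
    then show ?thesis using assms by simp
  qed
  finally show ?thesis .
qed

lemma ln_small_bound:
  fixes h \<gamma> :: real
  assumes h: "0 < h" "h < 1" and g: "0 < \<gamma>"
  shows "(ln h)^4 \<le> h powr (-4*\<gamma>) / \<gamma>^4"
proof -
  have p: "0 < h powr (-\<gamma>)" using h by (simp add: powr_gt_zero)
  have "ln (h powr (-\<gamma>)) \<le> h powr (-\<gamma>) - 1" by (rule ln_le_minus_one[OF p])
  then have "-\<gamma> * ln h \<le> h powr (-\<gamma>)" using h by (simp add: ln_powr)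
  then have "- ln h \<le> h powr (-\<gamma>) / \<gamma>" using g by (simp add: field_simps)
  moreover have "0 \<le> - ln h" using h by simp
  ultimately have "(- ln h)^4 \<le> (h powr (-\<gamma>) / \<gamma>)^4" by (intro power_mono) auto
  also have "(h powr (-\<gamma>) / \<gamma>)^4 = h powr (-4*\<gamma>) / \<gamma>^4"
  proof -
    have "(h powr (-\<gamma>))^4 = h powr (of_nat 4 * (-\<gamma>))" using h by (intro powr_power) simp
    then show ?thesis by (simp add: power_divide)
  qed
  finally show ?thesis by simp
qed

lemma ln4_integrable:
  fixes f :: "real \<Rightarrow> real" and \<alpha>' c \<delta> :: real
  assumes pdf: "is_pdf_nonneg f" and ap: "0 < \<alpha>'" and cp: "0 < c" and dp: "0 < \<delta>"
    and fs: "\<And>h. 0 < h \<Longrightarrow> h < \<delta> \<Longrightarrow> f h = c * h powr (\<alpha>' - 1)"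
    and m2: "integrable (law_H f) (\<lambda>h. h\<^sup>2)"
  shows "integrable (law_H f) (\<lambda>h. (ln h)^4)"
proof -
  define d where "d = min \<delta> 1"
  define \<gamma> where "\<gamma> = \<alpha>'/8"
  have d: "0 < d" "d \<le> \<delta>" "d \<le> 1" using dp by (auto simp: d_def)
  have gp: "0 < \<gamma>" using ap by (simp add: \<gamma>_def)
  have [measurable]: "f \<in> borel_measurable borel" using pdf by (simp add: pdf_meas)
  have fnn: "\<And>h. 0 \<le> f h" and fneg: "\<And>h. h < 0 \<Longrightarrow> f h = 0" using pdf by (auto simp: is_pdf_nonneg_def)
  have mi2: "(\<lambda>h::real. h\<^sup>2) \<in> borel_measurable borel" by measurable
  have i1: "integrable lborel (\<lambda>h. f h * h\<^sup>2)" using m2 by (subst (asm) H_integrable_iff[OF pdf mi2])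
  have i2: "integrable lborel f" using f_integrable[OF pdf] .
  have i3: "integrable lborel (\<lambda>h. indicator {0..d} h * h powr (\<alpha>'/2 - 1))"
    using powr_int0[of "\<alpha>'/2 - 1" d] ap d by (simp add: has_bochner_integral_iff)
  let ?D = "\<lambda>h. 16 * (f h * h\<^sup>2) + (ln d)^4 * f h + c / \<gamma>^4 * (indicator {0..d} h * h powr (\<alpha>'/2 - 1))"
  have "integrable lborel (\<lambda>h. f h * (ln h)^4)"
  proof (rule Bochner_Integration.integrable_bound[of _ ?D])
    show "integrable lborel ?D" using i1 i2 i3 by simp
    show "(\<lambda>h. f h * (ln h)^4) \<in> borel_measurable lborel" by measurable
    show "AE h in lborel. norm (f h * (ln h)^4) \<le> norm (?D h)"
    proof (rule AE_I2)
      fix h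
      have D0: "0 \<le> ?D h" using fnn cp gp by (auto simp: indicator_def)
      have L0: "0 \<le> f h * (ln h)^4" using fnn by simp
      have "f h * (ln h)^4 \<le> ?D h"
      proof (cases "h \<le> 0")
        case True
        then have "f h * (ln h)^4 = 0" using fneg by (cases "h = 0") auto
        then show ?thesis using D0 by linarith
      next
        case hpos: False
        show ?thesis
        proof (cases "1 \<le> h")
          case True
          have "f h * (ln h)^4 \<le> f h * (16 * h\<^sup>2)" by (intro mult_left_mono ln_le_16sq True fnn)
          moreover have "0 \<le> (ln d)^4 * f h + c / \<gamma>^4 * (indicator {0..d} h * h powr (\<alpha>'/2 - 1))"
            using fnn cp gp by (auto simp: indicator_def)
          ultimately show ?thesis by simp
        next
          case h1: False
          show ?thesis
          proof (cases "d \<le> h")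
            case True
            have "ln d \<le> ln h" using True d by simp
            moreover have "ln h \<le> 0" using h1 hpos by simp
            ultimately have "(ln h)^4 \<le> (ln d)^4"
              using power_mono[of "- ln h" "- ln d" 4] by simp
            then have "f h * (ln h)^4 \<le> (ln d)^4 * f h" using fnn by (simp add: mult_left_mono mult.commute)
            moreover have "0 \<le> 16 * (f h * h\<^sup>2) + c / \<gamma>^4 * (indicator {0..d} h * h powr (\<alpha>'/2 - 1))"
              using fnn cp gp by (auto simp: indicator_def)
            ultimately show ?thesis by simp
          next
            case False
            then have hd: "0 < h" "h < d" using hpos by auto
            have fh: "f h = c * h powr (\<alpha>' - 1)" using fs hd d by simp
            have "(ln h)^4 \<le> h powr (-4*\<gamma>) / \<gamma>^4" using ln_small_bound[of h \<gamma>] hd d gp by simp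
            then have "f h * (ln h)^4 \<le> c * h powr (\<alpha>' - 1) * (h powr (-4*\<gamma>) / \<gamma>^4)"
              unfolding fh using cp by (intro mult_left_mono) auto
            also have "\<dots> = c / \<gamma>^4 * (h powr (\<alpha>' - 1) * h powr (-4*\<gamma>))" by simp
            also have "h powr (\<alpha>' - 1) * h powr (-4*\<gamma>) = h powr (\<alpha>'/2 - 1)"
              unfolding powr_add[symmetric] by (simp add: \<gamma>_def)
            also have "c / \<gamma>^4 * h powr (\<alpha>'/2 - 1) = c / \<gamma>^4 * (indicator {0..d} h * h powr (\<alpha>'/2 - 1))"
              using hd by (simp add: indicator_def)
            finally show ?thesis using fnn by (simp add: add_increasing)
          qed
        qed
      qed
      then show "norm (f h * (ln h)^4) \<le> norm (?D h)" using D0 L0 by simp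
    qed
  qed
  moreover have mi: "(\<lambda>h::real. (ln h)^4) \<in> borel_measurable borel" by measurable
  ultimately show ?thesis by (subst H_integrable_iff[OF pdf mi])
qed

lemma small_prob:
  fixes f :: "real \<Rightarrow> real" and \<alpha>' c \<delta> \<epsilon> :: real
  assumes pdf: "is_pdf_nonneg f" and ap: "0 < \<alpha>'" and cp: "0 < c"
    and fs: "\<And>h. 0 < h \<Longrightarrow> h < \<delta> \<Longrightarrow> f h = c * h powr (\<alpha>' - 1)"
    and e: "0 < \<epsilon>" "\<epsilon> \<le> \<delta>"
  shows "integrable (law_H f) (indicator {0<..<\<epsilon>} :: real \<Rightarrow> real)"
    "(\<integral>h. indicator {0<..<\<epsilon>} h \<partial>law_H f) \<le> c / \<alpha>' * \<epsilon> powr \<alpha>'"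
proof -
  have [measurable]: "f \<in> borel_measurable borel" using pdf by (simp add: pdf_meas)
  have fnn: "\<And>h. 0 \<le> f h" using pdf by (auto simp: is_pdf_nonneg_def)
  have hb: "has_bochner_integral lborel (\<lambda>h. indicator {0..\<epsilon>} h * h powr (\<alpha>' - 1)) (\<epsilon> powr \<alpha>' / \<alpha>')"
    using powr_int0[of "\<alpha>' - 1" \<epsilon>] ap e by simp
  have i3: "integrable lborel (\<lambda>h. c * (indicator {0..\<epsilon>} h * h powr (\<alpha>' - 1)))"
    using hb by (simp add: has_bochner_integral_iff)
  have pw: "\<And>h. f h * indicator {0<..<\<epsilon>} h \<le> c * (indicator {0..\<epsilon>} h * h powr (\<alpha>' - 1))"
  proof -
    fix h show "f h * indicator {0<..<\<epsilon>} h \<le> c * (indicator {0..\<epsilon>} h * h powr (\<alpha>' - 1))"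
    proof (cases "0 < h \<and> h < \<epsilon>")
      case True then show ?thesis using fs[of h] e by (auto simp: indicator_def)
    next
      case False then show ?thesis using cp by (auto simp: indicator_def)
    qed
  qed
  have i4: "integrable lborel (\<lambda>h. f h * indicator {0<..<\<epsilon>} h)"
  proof (rule Bochner_Integration.integrable_bound[OF i3])
    show "(\<lambda>h. f h * indicator {0<..<\<epsilon>} h) \<in> borel_measurable lborel" by measurable
    show "AE h in lborel. norm (f h * indicator {0<..<\<epsilon>} h) \<le> norm (c * (indicator {0..\<epsilon>} h * h powr (\<alpha>' - 1)))"
    proof (rule AE_I2)
      fix h
      have "0 \<le> f h * indicator {0<..<\<epsilon>} h" using fnn[of h] by simp
      then have "norm (f h * indicator {0<..<\<epsilon>} h) = f h * indicator {0<..<\<epsilon>} h" by simp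
      also have "\<dots> \<le> c * (indicator {0..\<epsilon>} h * h powr (\<alpha>' - 1))" by (rule pw)
      also have "\<dots> \<le> norm (c * (indicator {0..\<epsilon>} h * h powr (\<alpha>' - 1)))" by simp
      finally show "norm (f h * indicator {0<..<\<epsilon>} h) \<le> norm (c * (indicator {0..\<epsilon>} h * h powr (\<alpha>' - 1)))" .
    qed
  qed
  have mi: "(indicator {0<..<\<epsilon>} :: real\<Rightarrow>real) \<in> borel_measurable borel" by measurable
  show "integrable (law_H f) (indicator {0<..<\<epsilon>} :: real \<Rightarrow> real)"
    by (subst H_integrable_iff[OF pdf mi]) (rule i4)
  have "(\<integral>h. indicator {0<..<\<epsilon>} h \<partial>law_H f) = (\<integral>h. f h * indicator {0<..<\<epsilon>} h \<partial>lborel)"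
    by (rule H_integral[OF pdf mi])
  also have "\<dots> \<le> (\<integral>h. c * (indicator {0..\<epsilon>} h * h powr (\<alpha>' - 1)) \<partial>lborel)"
    by (rule integral_mono[OF i4 i3 pw])
  also have "\<dots> = c / \<alpha>' * \<epsilon> powr \<alpha>'" using has_bochner_integral_integral_eq[OF hb] by simp
  finally show "(\<integral>h. indicator {0<..<\<epsilon>} h \<partial>law_H f) \<le> c / \<alpha>' * \<epsilon> powr \<alpha>'" .
qed


lemma sets_law_X[measurable_cong]: "sets (law_X a) = sets borel"
  by (simp add: law_X_def)
lemma sets_law_Z[measurable_cong]: "sets (law_Z s) = sets borel"
  by (simp add: law_Z_def)
lemma sets_law_H[measurable_cong]: "sets (law_H f) = sets borel"
  by (simp add: law_H_def)

lemma out_dens_meas: assumes a: "0 < a"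
  shows "(\<lambda>p. out_dens a \<sigma> (fst p) (snd p)) \<in> borel_measurable (borel \<Otimes>\<^sub>M borel)"
proof -
  interpret prob_space "law_X a" using probX[OF a] .
  have m: "(\<lambda>(p, x). normal_density (fst p * x) \<sigma> (snd p)) \<in> borel_measurable ((borel \<Otimes>\<^sub>M borel) \<Otimes>\<^sub>M law_X a)"
    unfolding normal_density_def by measurable
  have "(\<lambda>p. \<integral>x. normal_density (fst p * x) \<sigma> (snd p) \<partial>law_X a) \<in> borel_measurable (borel \<Otimes>\<^sub>M borel)"
    using borel_measurable_lebesgue_integral[OF m] by simp
  then show ?thesis unfolding out_dens_def cond_dens_def by simp
qed

lemma info_meas: assumes a: "0 < a"
  shows "info_rv a \<sigma> \<in> borel_measurable (joint_law a \<sigma> f)"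
proof -
  have om[measurable]: "(\<lambda>p. out_dens a \<sigma> (fst p) (snd p)) \<in> borel_measurable (borel \<Otimes>\<^sub>M borel)"
    by (rule out_dens_meas[OF a])
  have e: "info_rv a \<sigma> = (\<lambda>\<omega>. ln (normal_density (snd (snd \<omega>) * fst \<omega>) \<sigma> (snd (snd \<omega>) * fst \<omega> + fst (snd \<omega>)) /
        (\<lambda>p. out_dens a \<sigma> (fst p) (snd p)) (snd (snd \<omega>), snd (snd \<omega>) * fst \<omega> + fst (snd \<omega>))))"
    by (auto simp: info_rv_def info_dens_def cond_dens_def fun_eq_iff split: prod.splits)
  show ?thesis unfolding e joint_law_def unfolding normal_density_def by measurable
qed

lemma distr_pair_snd': assumes "prob_space M1" "sigma_finite_measure M2"
  shows "distr (M1 \<Otimes>\<^sub>M M2) M2 snd = M2"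
proof (intro measure_eqI)
  interpret p1: prob_space M1 by fact
  interpret p2: sigma_finite_measure M2 by fact
  fix A assume A: "A \<in> sets (distr (M1 \<Otimes>\<^sub>M M2) M2 snd)"
  from A have "emeasure (distr (M1 \<Otimes>\<^sub>M M2) M2 snd) A = emeasure (M1 \<Otimes>\<^sub>M M2) (space M1 \<times> A)"
    by (auto simp add: emeasure_distr space_pair_measure dest: sets.sets_into_space intro!: arg_cong2[where f=emeasure])
  with A show "emeasure (distr (M1 \<Otimes>\<^sub>M M2) M2 snd) A = emeasure M2 A"
    by (simp add: p2.emeasure_pair_measure_Times p1.emeasure_space_1)
qed simp

lemma AE_snd: assumes "prob_space M1" "sigma_finite_measure M2" "AE y in M2. P y"
  shows "AE \<omega> in M1 \<Otimes>\<^sub>M M2. P (snd \<omega>)"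
proof -
  have "AE y in distr (M1 \<Otimes>\<^sub>M M2) M2 snd. P y"
    by (subst distr_pair_snd'[OF assms(1,2)]) (rule assms(3))
  then show ?thesis by (rule AE_distrD[OF measurable_snd])
qed

lemma AE_fst: assumes "prob_space M2" "AE x in M1. P x"
  shows "AE \<omega> in M1 \<Otimes>\<^sub>M M2. P (fst \<omega>)"
proof -
  interpret prob_space M2 by fact
  have "AE y in distr (M1 \<Otimes>\<^sub>M M2) M1 fst. P y"
    by (subst distr_pair_fst) (rule assms(2))
  then show ?thesis by (rule AE_distrD[OF measurable_fst])
qed

lemma AE_X: "0 < a \<Longrightarrow> AE x in law_X a. -a/2 < x \<and> x < a/2"
  unfolding law_X_def by (rule AE_uniform_measureI) auto

lemma AE_H: assumes "is_pdf_nonneg f" shows "AE h in law_H f. 0 < h"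
proof -
  have [measurable]: "f \<in> borel_measurable borel" using assms by (simp add: pdf_meas)
  have "AE h in lborel. h \<noteq> 0" by (rule AE_lborel_singleton)
  then have "AE h in lborel. 0 < f h \<longrightarrow> 0 < h"
    by eventually_elim (use assms in \<open>auto simp: is_pdf_nonneg_def not_less_iff_gr_or_eq\<close>)
  then show ?thesis unfolding law_H_def by (subst AE_density) auto
qed

lemma AE_joint:
  assumes a: "0 < a" and s: "0 < \<sigma>" and pdf: "is_pdf_nonneg f"
  shows "AE \<omega> in joint_law a \<sigma> f. -a/2 < fst \<omega> \<and> fst \<omega> < a/2 \<and> 0 < snd (snd \<omega>)"
proof -
  have pZH: "prob_space (law_Z \<sigma> \<Otimes>\<^sub>M law_H f)"
    by (intro prob_space_pair probZ[OF s] probH[OF pdf])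
  interpret pX: prob_space "law_X a" using probX[OF a] .
  interpret pZ: prob_space "law_Z \<sigma>" using probZ[OF s] .
  interpret pH: prob_space "law_H f" using probH[OF pdf] .
  have 1: "AE \<omega> in joint_law a \<sigma> f. -a/2 < fst \<omega> \<and> fst \<omega> < a/2"
    unfolding joint_law_def by (rule AE_fst[OF pZH AE_X[OF a]])
  have "AE \<omega> in law_Z \<sigma> \<Otimes>\<^sub>M law_H f. 0 < snd \<omega>"
    by (rule AE_snd[OF probZ[OF s] _ AE_H[OF pdf]]) unfold_locales
  moreover have sf: "sigma_finite_measure (law_Z \<sigma> \<Otimes>\<^sub>M law_H f)"
    using pZH by (simp add: prob_space_imp_sigma_finite)
  ultimately have 2: "AE \<omega> in joint_law a \<sigma> f. 0 < snd (snd \<omega>)"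
    unfolding joint_law_def using AE_snd[OF probX[OF a] sf] by blast
  show ?thesis using 1 2 by eventually_elim auto
qed


definition Tf :: "real \<Rightarrow> real \<Rightarrow> real \<Rightarrow> real" where
  "Tf a \<sigma> h = ln (a\<^sup>2 * h\<^sup>2 / (2 * pi * exp 1 * \<sigma>\<^sup>2)) / 2"
definition Wf :: "real \<Rightarrow> real \<Rightarrow> real" where
  "Wf \<sigma> z = 1/2 - z\<^sup>2 / (2 * \<sigma>\<^sup>2)"

lemma Tf_eq: assumes "0 < a" "0 < h" "0 < \<sigma>"
  shows "Tf a \<sigma> h = ln (a*h) - ln (2*pi*\<sigma>\<^sup>2)/2 - 1/2"
proof -
  have p: "0 < a*h" "0 < 2*pi*\<sigma>\<^sup>2" using assms by auto
  have "a\<^sup>2 * h\<^sup>2 / (2 * pi * exp 1 * \<sigma>\<^sup>2) = (a*h)^2 / ((2*pi*\<sigma>\<^sup>2) * exp 1)"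
    by (simp add: power_mult_distrib mult_ac)
  also have "ln \<dots> = ln ((a*h)^2) - ln ((2*pi*\<sigma>\<^sup>2) * exp 1)"
    using p by (intro ln_divide_pos) auto
  also have "ln ((2*pi*\<sigma>\<^sup>2) * exp 1) = ln (2*pi*\<sigma>\<^sup>2) + 1"
    using p by (subst ln_mult_pos) auto
  also have "ln ((a*h)^2) = 2 * ln (a*h)"
    using p by (subst ln_realpow) auto
  finally show ?thesis unfolding Tf_def by simp
qed

lemma ln_nd: assumes "0 < \<sigma>" shows "ln (normal_density 0 \<sigma> z) = - ln (2*pi*\<sigma>\<^sup>2)/2 - z\<^sup>2/(2*\<sigma>\<^sup>2)"
proof -
  have p: "0 < 2*pi*\<sigma>\<^sup>2" using assms by auto
  have "ln (normal_density 0 \<sigma> z) = ln (1 / sqrt (2 * pi * \<sigma>\<^sup>2)) + ln (exp (- (z - 0)\<^sup>2 / (2 * \<sigma>\<^sup>2)))"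
    unfolding normal_density_def using p by (intro ln_mult_pos) auto
  also have "ln (1 / sqrt (2 * pi * \<sigma>\<^sup>2)) = - ln (2*pi*\<sigma>\<^sup>2)/2"
    using p by (simp add: ln_divide_pos ln_sqrt)
  also have "ln (exp (- (z - 0)\<^sup>2 / (2 * \<sigma>\<^sup>2))) = - z\<^sup>2/(2*\<sigma>\<^sup>2)"
    by simp
  finally show ?thesis by simp
qed

lemma Pint_pos:
  assumes a: "0 < a" and h: "0 < h" and s: "0 < \<sigma>" and x: "-a/2 < x" "x < a/2"
  shows "0 < Pint a \<sigma> h (h*x + z)"
proof -
  have "0 < min (h*a/2) \<sigma> * normal_density 0 \<sigma> (\<bar>z\<bar> + \<sigma>)"
    using a h s nd_pos[OF s] by auto
  then show ?thesis using Pint_lower1[OF a h s x, of z] by linarith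
qed

lemma info_decomp:
  assumes a: "0 < a" and h: "0 < h" and s: "0 < \<sigma>" and x: "-a/2 < x" "x < a/2"
  shows "info_rv a \<sigma> (x, z, h) = Tf a \<sigma> h + Wf \<sigma> z + (- ln (Pint a \<sigma> h (h*x + z)))"
proof -
  let ?P = "Pint a \<sigma> h (h*x + z)"
  have P: "0 < ?P" by (rule Pint_pos[OF a h s x])
  have c: "cond_dens \<sigma> h x (h*x + z) = normal_density 0 \<sigma> z"
    unfolding cond_dens_def normal_density_def by simp
  have nd: "0 < normal_density 0 \<sigma> z" by (rule nd_pos[OF s])
  have "info_rv a \<sigma> (x, z, h) = ln (cond_dens \<sigma> h x (h*x + z) / out_dens a \<sigma> h (h*x + z))"
    by (simp add: info_rv_def info_dens_def)
  also have "\<dots> = ln (normal_density 0 \<sigma> z / (?P / (a*h)))"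
    unfolding c out_dens_eq[OF a h s] ..
  also have "normal_density 0 \<sigma> z / (?P / (a*h)) = normal_density 0 \<sigma> z * (a*h) / ?P"
    by simp
  also have "ln \<dots> = ln (normal_density 0 \<sigma> z) + ln (a*h) - ln ?P"
    using P nd a h by (simp add: ln_divide_pos ln_mult_pos)
  also have "\<dots> = Tf a \<sigma> h + Wf \<sigma> z + (- ln ?P)"
    unfolding Tf_eq[OF a h s] ln_nd[OF s] Wf_def by simp
  finally show ?thesis .
qed

lemma B_nonneg:
  assumes a: "0 < a" and h: "0 < h" and s: "0 < \<sigma>" and x: "-a/2 < x" "x < a/2"
  shows "0 \<le> - ln (Pint a \<sigma> h (h*x + z))"
  using Pint_pos[OF a h s x] Pint_le1[OF s] by simp

lemma B_upper:
  assumes a: "0 < a" and h: "0 < h" and s: "0 < \<sigma>" and x: "-a/2 < x" "x < a/2" and sa: "\<sigma> \<le> a"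
  shows "- ln (Pint a \<sigma> h (h*x + z)) \<le> 4 + z\<^sup>2/\<sigma>\<^sup>2 + \<bar>ln h\<bar>"
proof -
  let ?P = "Pint a \<sigma> h (h*x + z)"
  define L where "L = min (h*a/2) \<sigma>"
  have L: "0 < L" using a h s by (simp add: L_def)
  have nd: "0 < normal_density 0 \<sigma> (\<bar>z\<bar> + \<sigma>)" by (rule nd_pos[OF s])
  have "L * normal_density 0 \<sigma> (\<bar>z\<bar> + \<sigma>) \<le> ?P" unfolding L_def by (rule Pint_lower1[OF a h s x])
  then have "ln (L * normal_density 0 \<sigma> (\<bar>z\<bar> + \<sigma>)) \<le> ln ?P"
    using L nd by (intro ln_mono) auto
  then have 1: "- ln ?P \<le> - ln L - ln (normal_density 0 \<sigma> (\<bar>z\<bar> + \<sigma>))"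
    using L nd by (simp add: ln_mult_pos)
  have r1b: "- ln (normal_density 0 \<sigma> (\<bar>z\<bar> + \<sigma>)) = ln (2*pi*\<sigma>\<^sup>2)/2 + (\<bar>z\<bar> + \<sigma>)\<^sup>2/(2*\<sigma>\<^sup>2)"
    unfolding ln_nd[OF s] by simp
  have r1c: "ln (2*pi*\<sigma>\<^sup>2) = ln (2*pi) + 2 * ln \<sigma>"
    using s by (simp add: ln_mult_pos ln_realpow)
  have r1d: "ln (L/\<sigma>) = ln L - ln \<sigma>" using L s by (simp add: ln_divide_pos)
  have "ln (2*pi) \<le> ln 8" using pi_less_4 by (intro ln_mono) auto
  also have "ln (8::real) = 3 * ln 2" using ln_realpow[of 2 3] by simp
  finally have 2: "ln (2*pi)/2 \<le> 3/2" using ln_2_less_1 by simp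
  have 3: "(\<bar>z\<bar> + \<sigma>)\<^sup>2/(2*\<sigma>\<^sup>2) \<le> z\<^sup>2/\<sigma>\<^sup>2 + 1"
  proof -
    have "(\<bar>z\<bar> + \<sigma>)\<^sup>2 \<le> 2*z\<^sup>2 + 2*\<sigma>\<^sup>2"
    proof -
      have "0 \<le> (\<bar>z\<bar> - \<sigma>)\<^sup>2" by simp
      then show ?thesis by (simp add: power2_eq_square algebra_simps abs_mult_self_eq)
    qed
    then have "(\<bar>z\<bar> + \<sigma>)\<^sup>2/(2*\<sigma>\<^sup>2) \<le> (2*z\<^sup>2 + 2*\<sigma>\<^sup>2)/(2*\<sigma>\<^sup>2)"
      using s by (intro divide_right_mono) auto
    also have "\<dots> = z\<^sup>2/\<sigma>\<^sup>2 + 1" using s by (simp add: field_simps)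
    finally show ?thesis .
  qed
  have 4: "- ln (L/\<sigma>) \<le> 1 + \<bar>ln h\<bar>"
  proof (cases "\<sigma> \<le> h*a/2")
    case True
    then have "L = \<sigma>" by (simp add: L_def)
    then show ?thesis using s by simp
  next
    case False
    then have "L/\<sigma> = h * (a/\<sigma>) / 2" using s by (simp add: L_def field_simps)
    moreover have "1 \<le> a/\<sigma>" using sa s by simp
    moreover have "h * 1 \<le> h * (a/\<sigma>)" using h \<open>1 \<le> a/\<sigma>\<close> by (intro mult_left_mono) auto
    ultimately have "h/2 \<le> L/\<sigma>" by simp
    then have "ln (h/2) \<le> ln (L/\<sigma>)" using h by (intro ln_mono) auto
    moreover have "ln (h/2) = ln h - ln 2" using h by (simp add: ln_div)
    ultimately show ?thesis using ln_2_less_1 by linarith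
  qed
  show ?thesis using 1 r1b r1c r1d 2 3 4 by linarith
qed

lemma B_good:
  assumes a: "0 < a" and h: "0 < h" and s: "0 < \<sigma>" and x: "-a/2 < x" "x < a/2"
    and K: "2 \<le> K\<^sup>2" "0 < K" and z: "\<bar>z\<bar> \<le> K*\<sigma>"
    and g1: "2*K*\<sigma> < h*(x + a/2)" and g2: "2*K*\<sigma> < h*(a/2 - x)"
  shows "- ln (Pint a \<sigma> h (h*x + z)) \<le> 2 / K\<^sup>2"
proof -
  let ?P = "Pint a \<sigma> h (h*x + z)"
  have m: "0 < K*\<sigma>" using K s by simp
  have "1 - \<sigma>\<^sup>2/(K*\<sigma>)\<^sup>2 \<le> ?P"
  proof (rule Pint_good[OF s m])
    fix u assume u: "\<bar>u\<bar> \<le> K*\<sigma>"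
    have e: "(h*x + z - u)/h = x + (z - u)/h" using h by (simp add: field_simps)
    have zu: "\<bar>z - u\<bar> \<le> 2*K*\<sigma>" using u z by linarith
    have "\<bar>(z - u)/h\<bar> \<le> 2*K*\<sigma>/h" using zu h by (simp add: divide_right_mono)
    moreover have "2*K*\<sigma>/h < x + a/2" using g1 h by (simp add: field_simps)
    moreover have "2*K*\<sigma>/h < a/2 - x" using g2 h by (simp add: field_simps)
    ultimately show "-a/2 < (h*x + z - u)/h \<and> (h*x + z - u)/h < a/2"
      unfolding e by linarith
  qed
  moreover have "\<sigma>\<^sup>2/(K*\<sigma>)\<^sup>2 = 1/K\<^sup>2" using s by (simp add: power_mult_distrib)
  ultimately have P: "1 - 1/K\<^sup>2 \<le> ?P" by simp
  define v where "v = 1/K\<^sup>2"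
  have v: "0 \<le> v" "v \<le> 1/2" using K by (auto simp: v_def field_simps)
  have "- v - 2 * v\<^sup>2 \<le> ln (1 - v)" by (rule ln_one_minus_pos_lower_bound[OF v])
  moreover have "ln (1 - v) \<le> ln ?P" using P v by (intro ln_mono) (auto simp: v_def)
  moreover have "v\<^sup>2 \<le> v/2" using v by (simp add: power2_eq_square mult_left_mono[of v "1/2" v, simplified])
  ultimately have "- ln ?P \<le> 2 * v" by linarith
  then show ?thesis by (simp add: v_def)
qed


lemma Z_mom:
  assumes s: "0 < \<sigma>"
  shows "integrable (law_Z \<sigma>) (\<lambda>z. z^(2*k))"
    "(\<integral>z. z^(2*k) \<partial>law_Z \<sigma>) = fact (2 * k) / ((2 / \<sigma>\<^sup>2)^k * fact k)"
proof -
  have hb: "has_bochner_integral lborel (\<lambda>x. normal_density 0 \<sigma> x * (x - 0) ^ (2 * k)) (fact (2 * k) / ((2 / \<sigma>\<^sup>2)^k * fact k))"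
    by (rule normal_moment_even[OF s])
  have m: "(\<lambda>z::real. z^(2*k)) \<in> borel_measurable borel" by measurable
  have mn: "normal_density 0 \<sigma> \<in> borel_measurable lborel" unfolding normal_density_def by measurable
  show "integrable (law_Z \<sigma>) (\<lambda>z. z^(2*k))"
    unfolding law_Z_def using hb
    by (subst integrable_density) (auto simp: m mn normal_density_nonneg has_bochner_integral_iff)
  show "(\<integral>z. z^(2*k) \<partial>law_Z \<sigma>) = fact (2 * k) / ((2 / \<sigma>\<^sup>2)^k * fact k)"
    unfolding law_Z_def using hb
    by (subst integral_density) (auto simp: m mn normal_density_nonneg has_bochner_integral_iff)
qed

lemma Z_mom2: "0 < \<sigma> \<Longrightarrow> integrable (law_Z \<sigma>) (\<lambda>z. z\<^sup>2) \<and> (\<integral>z. z\<^sup>2 \<partial>law_Z \<sigma>) = \<sigma>\<^sup>2"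
  using Z_mom[of \<sigma> 1] by simp

lemma Z_mom4: "0 < \<sigma> \<Longrightarrow> integrable (law_Z \<sigma>) (\<lambda>z. z^4) \<and> (\<integral>z. z^4 \<partial>law_Z \<sigma>) = 3 * \<sigma>^4"
  using Z_mom[of \<sigma> 2] by (simp add: fact_numeral power_divide power_mult_distrib flip: power_mult)

lemma Z_mom8: "0 < \<sigma> \<Longrightarrow> integrable (law_Z \<sigma>) (\<lambda>z. z^8) \<and> (\<integral>z. z^8 \<partial>law_Z \<sigma>) = 105 * \<sigma>^8"
  using Z_mom[of \<sigma> 4] by (simp add: fact_numeral power_divide power_mult_distrib flip: power_mult)

lemma W_facts:
  assumes s: "0 < \<sigma>"
  shows "integrable (law_Z \<sigma>) (Wf \<sigma>)" "integral\<^sup>L (law_Z \<sigma>) (Wf \<sigma>) = 0"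
    "integrable (law_Z \<sigma>) (\<lambda>z. (Wf \<sigma> z)\<^sup>2)" "(\<integral>z. (Wf \<sigma> z)\<^sup>2 \<partial>law_Z \<sigma>) = 1/2"
proof -
  interpret prob_space "law_Z \<sigma>" using probZ[OF s] .
  note m2 = Z_mom2[OF s] and m4 = Z_mom4[OF s]
  have e1: "Wf \<sigma> = (\<lambda>z. 1/2 - z\<^sup>2 / (2 * \<sigma>\<^sup>2))" by (simp add: Wf_def fun_eq_iff)
  show "integrable (law_Z \<sigma>) (Wf \<sigma>)" unfolding e1 using m2 by auto
  show "integral\<^sup>L (law_Z \<sigma>) (Wf \<sigma>) = 0" unfolding e1 using m2 s
    by (simp add: prob_space)
  have e2: "(\<lambda>z. (Wf \<sigma> z)\<^sup>2) = (\<lambda>z. 1/4 - z\<^sup>2 / (2 * \<sigma>\<^sup>2) + z^4 / (4 * \<sigma>^4))"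
    using s by (auto simp: Wf_def fun_eq_iff power2_eq_square field_simps eval_nat_numeral)
  show "integrable (law_Z \<sigma>) (\<lambda>z. (Wf \<sigma> z)\<^sup>2)" unfolding e2 using m2 m4 by auto
  have "(\<integral>z. (Wf \<sigma> z)\<^sup>2 \<partial>law_Z \<sigma>) = 1/4 - \<sigma>\<^sup>2 / (2 * \<sigma>\<^sup>2) + 3 * \<sigma>^4 / (4 * \<sigma>^4)"
    unfolding e2 using m2 m4 by (simp add: prob_space)
  also have "\<dots> = 1/2" using s by (simp add: field_simps)
  finally show "(\<integral>z. (Wf \<sigma> z)\<^sup>2 \<partial>law_Z \<sigma>) = 1/2" .
qed

lemma pm3: "(p + q + r)\<^sup>2 \<le> 3 * (p\<^sup>2 + q\<^sup>2 + (r::real)\<^sup>2)"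
proof -
  have "0 \<le> (p - q)\<^sup>2 + (q - r)\<^sup>2 + (p - r)\<^sup>2" by simp
  then show ?thesis by (simp add: power2_eq_square algebra_simps)
qed

lemma pm4: "(p + q + r)^4 \<le> 27 * (p^4 + q^4 + (r::real)^4)"
proof -
  have "(p + q + r)^4 = ((p + q + r)\<^sup>2)\<^sup>2" by simp
  also have "\<dots> \<le> (3 * (p\<^sup>2 + q\<^sup>2 + r\<^sup>2))\<^sup>2" by (intro power_mono pm3) simp
  also have "\<dots> = 9 * (p\<^sup>2 + q\<^sup>2 + r\<^sup>2)\<^sup>2"
  proof -
    have n: "(3::real)^2 = 9" by simp
    show ?thesis by (simp only: power_mult_distrib n)
  qed
  also have "\<dots> \<le> 9 * (3 * ((p\<^sup>2)\<^sup>2 + (q\<^sup>2)\<^sup>2 + (r\<^sup>2)\<^sup>2))" by (intro mult_left_mono pm3) simp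
  finally show ?thesis by simp
qed

lemma sq_bound:
  fixes B D S l t :: real
  assumes "0 \<le> B" "B \<le> D" "0 \<le> S" "0 < l" "S < 1 \<Longrightarrow> B \<le> 2*t\<^sup>2"
  shows "B\<^sup>2 \<le> 4*t^4 + l * D^4 / 2 + S / (2*l)"
proof (cases "S < 1")
  case True
  then have "B\<^sup>2 \<le> (2*t\<^sup>2)\<^sup>2" using assms by (intro power_mono) auto
  moreover have "0 \<le> l * D^4 / 2 + S / (2*l)" using assms by auto
  ultimately show ?thesis by (simp add: power_mult_distrib)
next
  case False
  have D: "0 \<le> D" using assms by linarith
  have c1: "B\<^sup>2 \<le> D\<^sup>2" using assms by (intro power_mono) auto
  have c2: "D\<^sup>2 \<le> l * D^4 / 2 + 1 / (2*l)"
  proof -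
    have "0 \<le> (l * D\<^sup>2 - 1)\<^sup>2" by simp
    then have "2 * l * D\<^sup>2 \<le> l\<^sup>2 * D^4 + 1" by (simp add: power2_eq_square algebra_simps eval_nat_numeral)
    then have "2 * l * D\<^sup>2 / (2*l) \<le> (l\<^sup>2 * D^4 + 1) / (2*l)" using assms(4) by (intro divide_right_mono) auto
    also have "(l\<^sup>2 * D^4 + 1) / (2*l) = l * D^4 / 2 + 1 / (2*l)" using assms(4) by (simp add: field_simps power2_eq_square)
    finally show ?thesis using assms(4) by simp
  qed
  have c3: "1 / (2*l) \<le> S / (2*l)" using False assms(4) by (intro divide_right_mono) auto
  have c4: "0 \<le> 4*t^4" by simp
  show ?thesis using c1 c2 c3 c4 by linarith
qed

lemma dom_int:
  fixes F P :: "'a \<Rightarrow> real"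
  assumes "integrable M P" "F \<in> borel_measurable M" "AE x in M. \<bar>F x\<bar> \<le> k * P x"
  shows "integrable M F"
proof (rule Bochner_Integration.integrable_bound[of _ "\<lambda>x. k * P x"])
  show "integrable M (\<lambda>x. k * P x)" using assms(1) by simp
  show "AE x in M. norm (F x) \<le> norm (k * P x)" using assms(3) by eventually_elim auto
qed fact


lemma abs_le_1_pow4: "\<bar>x::real\<bar> \<le> 1 + x^4" "x\<^sup>2 \<le> 1 + x^4"
proof -
  show "x\<^sup>2 \<le> 1 + x^4"
  proof (cases "\<bar>x\<bar> \<le> 1")
    case True
    then have "\<bar>x\<bar>^2 \<le> 1^2" by (intro power_mono) auto
    then have "x\<^sup>2 \<le> 1" by simp
    moreover have "0 \<le> x^4" by (simp add: zero_le_even_power)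
    ultimately show ?thesis by linarith
  next
    case False
    then have "1 \<le> x\<^sup>2" by (metis abs_le_square_iff abs_one less_imp_le not_le one_power2)
    then have "x\<^sup>2 * 1 \<le> x\<^sup>2 * x\<^sup>2" by (intro mult_left_mono) auto
    then show ?thesis by (simp add: power2_eq_square eval_nat_numeral)
  qed
  then show "\<bar>x\<bar> \<le> 1 + x^4"
  proof (cases "\<bar>x\<bar> \<le> 1")
    case True
    moreover have "0 \<le> x^4" by (simp add: zero_le_even_power)
    ultimately show ?thesis by linarith
  next
    case False
    then have "\<bar>x\<bar> * 1 \<le> \<bar>x\<bar> * \<bar>x\<bar>" by (intro mult_left_mono) auto
    then have "\<bar>x\<bar> \<le> x\<^sup>2" by (simp add: power2_eq_square abs_mult_self_eq)
    then show ?thesis using \<open>x\<^sup>2 \<le> 1 + x^4\<close> by linarith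
  qed
qed

locale fad =
  fixes f :: "real \<Rightarrow> real" and \<alpha>' c \<delta> :: real
  assumes pdf: "is_pdf_nonneg f" and ap: "0 < \<alpha>'" and cp: "0 < c" and dp: "0 < \<delta>"
    and fs: "\<And>h. 0 < h \<Longrightarrow> h < \<delta> \<Longrightarrow> f h = c * h powr (\<alpha>' - 1)"
    and m2: "integrable (law_H f) (\<lambda>h. h\<^sup>2)"
begin

lemma pH: "prob_space (law_H f)" by (rule probH[OF pdf])

lemma ln4: "integrable (law_H f) (\<lambda>h. (ln h)^4)"
  by (rule ln4_integrable[OF pdf ap cp dp fs m2])

lemma ln2: "integrable (law_H f) (\<lambda>h. (ln h)\<^sup>2)"
proof (rule dom_int[of _ "\<lambda>h. 1 + (ln h)^4" _ 1])
  interpret prob_space "law_H f" by (rule pH)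
  show "integrable (law_H f) (\<lambda>h. 1 + (ln h)^4)" using ln4 by simp
  show "(\<lambda>h. (ln h)\<^sup>2) \<in> borel_measurable (law_H f)" by measurable
  show "AE x in law_H f. \<bar>(ln x)\<^sup>2\<bar> \<le> 1 * (1 + (ln x)^4)" using abs_le_1_pow4(2) by simp
qed

lemma ln1: "integrable (law_H f) (\<lambda>h. ln h)"
proof (rule dom_int[of _ "\<lambda>h. 1 + (ln h)^4" _ 1])
  interpret prob_space "law_H f" by (rule pH)
  show "integrable (law_H f) (\<lambda>h. 1 + (ln h)^4)" using ln4 by simp
  show "(\<lambda>h. ln h) \<in> borel_measurable (law_H f)" by measurable
  show "AE x in law_H f. \<bar>ln x\<bar> \<le> 1 * (1 + (ln x)^4)" using abs_le_1_pow4(1) by simp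
qed

definition "L4 = (\<integral>h. (ln h)^4 \<partial>law_H f)"
definition "L2 = (\<integral>h. (ln h)\<^sup>2 \<partial>law_H f)"
definition "m1 = (\<integral>h. ln h \<partial>law_H f)"

lemma var_ln: "integrable (law_H f) (\<lambda>h. (ln h - m1)\<^sup>2)" "(\<integral>h. (ln h - m1)\<^sup>2 \<partial>law_H f) \<le> L2"
proof -
  interpret prob_space "law_H f" by (rule pH)
  have e: "(\<lambda>h. (ln h - m1)\<^sup>2) = (\<lambda>h. (ln h)\<^sup>2 - 2 * m1 * ln h + m1\<^sup>2)"
    by (auto simp: fun_eq_iff power2_eq_square algebra_simps)
  show "integrable (law_H f) (\<lambda>h. (ln h - m1)\<^sup>2)" unfolding e using ln1 ln2 by auto
  have "(\<integral>h. (ln h - m1)\<^sup>2 \<partial>law_H f) = L2 - 2 * m1 * m1 + m1\<^sup>2"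
    unfolding e using ln1 ln2 by (simp add: prob_space L2_def m1_def)
  also have "\<dots> \<le> L2" by (simp add: power2_eq_square)
  finally show "(\<integral>h. (ln h - m1)\<^sup>2 \<partial>law_H f) \<le> L2" .
qed

definition gf :: "real \<Rightarrow> real \<Rightarrow> real" where
  "gf \<sigma> = (\<lambda>h. ln (h\<^sup>2 / (2 * pi * exp 1 * \<sigma>\<^sup>2)) / 2)"

lemma gf_eq: assumes "0 < h" "0 < \<sigma>"
  shows "gf \<sigma> h = ln h - ln (2*pi*\<sigma>\<^sup>2)/2 - 1/2"
  using Tf_eq[of 1 h \<sigma>] assms by (simp add: gf_def Tf_def)

lemma Tf_gf: assumes "0 < a" "0 < h" "0 < \<sigma>"
  shows "Tf a \<sigma> h = gf \<sigma> h + ln a"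
  using Tf_eq[OF assms] gf_eq[OF assms(2,3)] assms by (simp add: ln_mult_pos)

lemma AEH: "AE h in law_H f. 0 < h" by (rule AE_H[OF pdf])

lemma gf_facts: assumes s: "0 < \<sigma>"
  shows "integrable (law_H f) (gf \<sigma>)" "integral\<^sup>L (law_H f) (gf \<sigma>) = m1 - ln (2*pi*\<sigma>\<^sup>2)/2 - 1/2"
    "integrable (law_H f) (\<lambda>h. (gf \<sigma> h - integral\<^sup>L (law_H f) (gf \<sigma>))\<^sup>2)"
    "(\<integral>h. (gf \<sigma> h - integral\<^sup>L (law_H f) (gf \<sigma>))\<^sup>2 \<partial>law_H f) \<le> L2"
proof -
  interpret prob_space "law_H f" by (rule pH)
  let ?k = "ln (2*pi*\<sigma>\<^sup>2)/2 + 1/2"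
  have ae: "AE h in law_H f. gf \<sigma> h = ln h - ?k" using AEH by eventually_elim (simp add: gf_eq s)
  have mg: "gf \<sigma> \<in> borel_measurable (law_H f)" unfolding gf_def by measurable
  have i0: "integrable (law_H f) (\<lambda>h. ln h - ?k)" using ln1 by simp
  show ig: "integrable (law_H f) (gf \<sigma>)"
    by (rule integrable_cong_AE_imp[OF i0 mg]) (use ae in \<open>eventually_elim, simp\<close>)
  have "integral\<^sup>L (law_H f) (gf \<sigma>) = (\<integral>h. ln h - ?k \<partial>law_H f)"
    by (rule integral_cong_AE[OF mg _ ae]) simp
  also have "\<dots> = m1 - ?k" using ln1 by (simp add: prob_space m1_def)
  finally show eI: "integral\<^sup>L (law_H f) (gf \<sigma>) = m1 - ln (2*pi*\<sigma>\<^sup>2)/2 - 1/2" by simp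
  have ae2: "AE h in law_H f. (gf \<sigma> h - integral\<^sup>L (law_H f) (gf \<sigma>))\<^sup>2 = (ln h - m1)\<^sup>2"
    using ae by eventually_elim (simp add: eI)
  have mg2: "(\<lambda>h. (gf \<sigma> h - integral\<^sup>L (law_H f) (gf \<sigma>))\<^sup>2) \<in> borel_measurable (law_H f)"
    using mg by measurable
  show "integrable (law_H f) (\<lambda>h. (gf \<sigma> h - integral\<^sup>L (law_H f) (gf \<sigma>))\<^sup>2)"
    by (rule integrable_cong_AE_imp[OF var_ln(1) mg2]) (use ae2 in \<open>eventually_elim, simp\<close>)
  have "(\<integral>h. (gf \<sigma> h - integral\<^sup>L (law_H f) (gf \<sigma>))\<^sup>2 \<partial>law_H f) = (\<integral>h. (ln h - m1)\<^sup>2 \<partial>law_H f)"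
    by (rule integral_cong_AE[OF mg2 _ ae2]) simp
  then show "(\<integral>h. (gf \<sigma> h - integral\<^sup>L (law_H f) (gf \<sigma>))\<^sup>2 \<partial>law_H f) \<le> L2" using var_ln(2) by simp
qed

lemma Tf_facts: assumes a: "0 < a" and s: "0 < \<sigma>"
  shows "integrable (law_H f) (Tf a \<sigma>)" "integral\<^sup>L (law_H f) (Tf a \<sigma>) = integral\<^sup>L (law_H f) (gf \<sigma>) + ln a"
proof -
  interpret prob_space "law_H f" by (rule pH)
  have ae: "AE h in law_H f. Tf a \<sigma> h = gf \<sigma> h + ln a" using AEH by eventually_elim (simp add: Tf_gf a s)
  have mT: "Tf a \<sigma> \<in> borel_measurable (law_H f)" unfolding Tf_def by measurable
  have i0: "integrable (law_H f) (\<lambda>h. gf \<sigma> h + ln a)" using gf_facts(1)[OF s] by simp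
  have mg: "(\<lambda>h. gf \<sigma> h + ln a) \<in> borel_measurable (law_H f)" unfolding gf_def by measurable
  show "integrable (law_H f) (Tf a \<sigma>)"
    by (rule integrable_cong_AE_imp[OF i0 mT]) (use ae in \<open>eventually_elim, simp\<close>)
  have "integral\<^sup>L (law_H f) (Tf a \<sigma>) = (\<integral>h. gf \<sigma> h + ln a \<partial>law_H f)"
    by (rule integral_cong_AE[OF mT mg ae])
  also have "\<dots> = integral\<^sup>L (law_H f) (gf \<sigma>) + ln a" using gf_facts(1)[OF s] by (simp add: prob_space)
  finally show "integral\<^sup>L (law_H f) (Tf a \<sigma>) = integral\<^sup>L (law_H f) (gf \<sigma>) + ln a" .
qed

end


context fad
begin

definition "Psi \<sigma> = (\<lambda>\<omega>::real\<times>real\<times>real. 256 + (fst (snd \<omega>))^8 / \<sigma>^8 + (ln (snd (snd \<omega>)))^4)"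
definition "Yf \<sigma> = (\<lambda>\<omega>::real\<times>real\<times>real. 4 + (fst (snd \<omega>))\<^sup>2 / \<sigma>\<^sup>2 + \<bar>ln (snd (snd \<omega>))\<bar>)"
definition "Bf a \<sigma> = (\<lambda>\<omega>. info_rv a \<sigma> \<omega> - Tf a \<sigma> (snd (snd \<omega>)) - Wf \<sigma> (fst (snd \<omega>)))"

lemma Y_ge1: "0 < \<sigma> \<Longrightarrow> 1 \<le> Yf \<sigma> \<omega>" by (simp add: Yf_def)

lemma Y4: "(Yf \<sigma> \<omega>)^4 \<le> 27 * Psi \<sigma> \<omega>"
proof -
  have "(Yf \<sigma> \<omega>)^4 \<le> 27 * (4^4 + ((fst (snd \<omega>))\<^sup>2 / \<sigma>\<^sup>2)^4 + \<bar>ln (snd (snd \<omega>))\<bar>^4)"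
    unfolding Yf_def by (rule pm4)
  also have "((fst (snd \<omega>))\<^sup>2 / \<sigma>\<^sup>2)^4 = (fst (snd \<omega>))^8 / \<sigma>^8"
    by (simp add: power_divide flip: power_mult)
  also have "\<bar>ln (snd (snd \<omega>))\<bar>^4 = (ln (snd (snd \<omega>)))^4" by (simp add: power_even_abs)
  finally show ?thesis by (simp add: Psi_def)
qed

lemma Ypow: assumes "0 < \<sigma>" shows "Yf \<sigma> \<omega> \<le> 27 * Psi \<sigma> \<omega>" "(Yf \<sigma> \<omega>)\<^sup>2 \<le> 27 * Psi \<sigma> \<omega>" "(Yf \<sigma> \<omega>)^3 \<le> 27 * Psi \<sigma> \<omega>"
proof -
  have y: "1 \<le> Yf \<sigma> \<omega>" using Y_ge1[OF assms] .
  have "Yf \<sigma> \<omega> \<le> Yf \<sigma> \<omega> ^ 4" using power_increasing[of 1 4 "Yf \<sigma> \<omega>"] y by simp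
  then show "Yf \<sigma> \<omega> \<le> 27 * Psi \<sigma> \<omega>" using Y4[of \<sigma> \<omega>] by linarith
  have "Yf \<sigma> \<omega> ^ 2 \<le> Yf \<sigma> \<omega> ^ 4" by (rule power_increasing) (use y in auto)
  then show "(Yf \<sigma> \<omega>)\<^sup>2 \<le> 27 * Psi \<sigma> \<omega>" using Y4[of \<sigma> \<omega>] by linarith
  have "Yf \<sigma> \<omega> ^ 3 \<le> Yf \<sigma> \<omega> ^ 4" by (rule power_increasing) (use y in auto)
  then show "(Yf \<sigma> \<omega>)^3 \<le> 27 * Psi \<sigma> \<omega>" using Y4[of \<sigma> \<omega>] by linarith
qed

context
  fixes a \<sigma> :: real
  assumes a: "0 < a" and s: "0 < \<sigma>" and sa: "\<sigma> \<le> a"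
begin

abbreviation "JM \<equiv> joint_law a \<sigma> f"

lemma sets_JM[measurable_cong]: "sets JM = sets (borel \<Otimes>\<^sub>M (borel \<Otimes>\<^sub>M borel))"
  unfolding joint_law_def by (intro sets_pair_measure_cong sets_law_X sets_law_Z sets_law_H)

lemma pX: "prob_space (law_X a)" by (rule probX[OF a])
lemma pZ: "prob_space (law_Z \<sigma>)" by (rule probZ[OF s])
lemma pZH: "prob_space (law_Z \<sigma> \<Otimes>\<^sub>M law_H f)" by (intro prob_space_pair pZ pH)
lemma pM: "prob_space JM" unfolding joint_law_def by (intro prob_space_pair pX pZH)

lemma liftH: fixes F :: "real \<Rightarrow> real" assumes "integrable (law_H f) F"
  shows "integrable JM (\<lambda>\<omega>. F (snd (snd \<omega>)))" "(\<integral>\<omega>. F (snd (snd \<omega>)) \<partial>JM) = integral\<^sup>L (law_H f) F"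
proof -
  have 1: "integrable (law_Z \<sigma> \<Otimes>\<^sub>M law_H f) (\<lambda>p. F (snd p))" "(\<integral>p. F (snd p) \<partial>(law_Z \<sigma> \<Otimes>\<^sub>M law_H f)) = integral\<^sup>L (law_H f) F"
    using int_snd[OF pZ pH assms] by auto
  show "integrable JM (\<lambda>\<omega>. F (snd (snd \<omega>)))" unfolding joint_law_def using int_snd(1)[OF pX pZH 1(1)] .
  show "(\<integral>\<omega>. F (snd (snd \<omega>)) \<partial>JM) = integral\<^sup>L (law_H f) F" unfolding joint_law_def using int_snd(2)[OF pX pZH 1(1)] 1(2) by simp
qed

lemma liftZ: fixes F :: "real \<Rightarrow> real" assumes "integrable (law_Z \<sigma>) F"
  shows "integrable JM (\<lambda>\<omega>. F (fst (snd \<omega>)))" "(\<integral>\<omega>. F (fst (snd \<omega>)) \<partial>JM) = integral\<^sup>L (law_Z \<sigma>) F"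
proof -
  have 1: "integrable (law_Z \<sigma> \<Otimes>\<^sub>M law_H f) (\<lambda>p. F (fst p))" "(\<integral>p. F (fst p) \<partial>(law_Z \<sigma> \<Otimes>\<^sub>M law_H f)) = integral\<^sup>L (law_Z \<sigma>) F"
    using int_fst[OF pH assms] by auto
  show "integrable JM (\<lambda>\<omega>. F (fst (snd \<omega>)))" unfolding joint_law_def using int_snd(1)[OF pX pZH 1(1)] .
  show "(\<integral>\<omega>. F (fst (snd \<omega>)) \<partial>JM) = integral\<^sup>L (law_Z \<sigma>) F" unfolding joint_law_def using int_snd(2)[OF pX pZH 1(1)] 1(2) by simp
qed

lemma liftX: fixes F :: "real \<Rightarrow> real" assumes "integrable (law_X a) F"
  shows "integrable JM (\<lambda>\<omega>. F (fst \<omega>))" "(\<integral>\<omega>. F (fst \<omega>) \<partial>JM) = integral\<^sup>L (law_X a) F"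
  unfolding joint_law_def using int_fst[OF pZH assms] by auto

lemma liftZH: fixes F :: "real \<times> real \<Rightarrow> real" assumes "integrable (law_Z \<sigma> \<Otimes>\<^sub>M law_H f) F"
  shows "integrable JM (\<lambda>\<omega>. F (snd \<omega>))" "(\<integral>\<omega>. F (snd \<omega>) \<partial>JM) = integral\<^sup>L (law_Z \<sigma> \<Otimes>\<^sub>M law_H f) F"
  unfolding joint_law_def using int_snd[OF pX pZH assms] by auto

lemma AEg: "AE \<omega> in JM. -a/2 < fst \<omega> \<and> fst \<omega> < a/2 \<and> 0 < snd (snd \<omega>)"
  by (rule AE_joint[OF a s pdf])

lemma Psi_int: "integrable JM (Psi \<sigma>)" "integral\<^sup>L JM (Psi \<sigma>) = 361 + L4"
proof -
  interpret prob_space JM by (rule pM)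
  have z8: "integrable (law_Z \<sigma>) (\<lambda>z. z^8 / \<sigma>^8)" using Z_mom8[OF s] by simp
  have z8i: "(\<integral>z. z^8 / \<sigma>^8 \<partial>law_Z \<sigma>) = 105" using Z_mom8[OF s] s by simp
  note A = liftZ[OF z8] and B = liftH[OF ln4]
  show "integrable JM (Psi \<sigma>)" unfolding Psi_def using A(1) B(1) by simp
  show "integral\<^sup>L JM (Psi \<sigma>) = 361 + L4" unfolding Psi_def using A B z8i s by (simp add: prob_space L4_def)
qed

lemma mInfo[measurable]: "info_rv a \<sigma> \<in> borel_measurable JM" by (rule info_meas[OF a])

lemma mBf[measurable]: "Bf a \<sigma> \<in> borel_measurable JM"
  unfolding Bf_def Tf_def Wf_def by measurable

lemma B_AE: "AE \<omega> in JM. 0 \<le> Bf a \<sigma> \<omega> \<and> Bf a \<sigma> \<omega> \<le> Yf \<sigma> \<omega>"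
  using AEg
proof eventually_elim
  fix \<omega> :: "real \<times> real \<times> real" assume w: "-a/2 < fst \<omega> \<and> fst \<omega> < a/2 \<and> 0 < snd (snd \<omega>)"
  obtain x z h where o: "\<omega> = (x, z, h)" by (cases \<omega>) auto
  have x: "-a/2 < x" "x < a/2" and h: "0 < h" using w o by auto
  have e: "Bf a \<sigma> \<omega> = - ln (Pint a \<sigma> h (h*x + z))"
    unfolding Bf_def o using info_decomp[OF a h s x, of z] by simp
  show "0 \<le> Bf a \<sigma> \<omega> \<and> Bf a \<sigma> \<omega> \<le> Yf \<sigma> \<omega>"
    unfolding e using B_nonneg[OF a h s x, of z] B_upper[OF a h s x sa, of z] by (simp add: Yf_def o)
qed

end
end


lemma X_ind_gen:
  fixes F :: "real \<Rightarrow> real"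
  assumes a: "0 < a" and lu: "l \<le> u" and Fm: "F \<in> borel_measurable borel"
    and F01: "\<And>x. 0 \<le> F x \<and> F x \<le> 1"
    and Fb: "\<And>x. -a/2 < x \<Longrightarrow> x < a/2 \<Longrightarrow> F x \<le> indicator {l..u} x"
  shows "integrable (law_X a) F" "integral\<^sup>L (law_X a) F \<le> (u - l) / a"
proof -
  interpret prob_space "law_X a" by (rule probX[OF a])
  have [measurable]: "F \<in> borel_measurable borel" by (rule Fm)
  show "integrable (law_X a) F"
    by (rule integrable_const_bound[where B=1]) (use F01 in auto)
  have mi: "integrable lborel (indicator {l..u} :: real \<Rightarrow> real)"
    using lu by (auto intro!: integrable_real_indicator)
  have i2: "integrable lborel (\<lambda>x. indicator {l..u} x / a)" using mi by simp
  have pw: "\<And>x. indicator {-a/2<..<a/2} x / a * F x \<le> indicator {l..u} x / a"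
  proof -
    fix x show "indicator {-a/2<..<a/2} x / a * F x \<le> indicator {l..u} x / a"
    proof (cases "-a/2 < x \<and> x < a/2")
      case True
      then have "F x \<le> indicator {l..u} x" using Fb[of x] by simp
      then have "F x / a \<le> indicator {l..u} x / a" using a by (intro divide_right_mono) auto
      moreover have e: "indicator {-a/2<..<a/2} x = (1::real)" using True by (simp add: indicator_def)
      ultimately show ?thesis unfolding e by simp
    next
      case False
      then have e: "indicator {-a/2<..<a/2} x = (0::real)" by (simp add: indicator_def)
      have "0 \<le> indicator {l..u} x / a" using a by simp
      then show ?thesis unfolding e by simp
    qed
  qed
  have i1: "integrable lborel (\<lambda>x. indicator {-a/2<..<a/2} x / a * F x)"
  proof (rule Bochner_Integration.integrable_bound[OF i2])
    show "(\<lambda>x. indicator {-a/2<..<a/2} x / a * F x) \<in> borel_measurable lborel" by measurable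
    show "AE x in lborel. norm (indicator {-a/2<..<a/2} x / a * F x) \<le> norm (indicator {l..u} x / a)"
    proof (rule AE_I2)
      fix x
      have "0 \<le> indicator {-a/2<..<a/2} x / a * F x" using F01[of x] a by simp
      then have n1: "norm (indicator {-a/2<..<a/2} x / a * F x) = indicator {-a/2<..<a/2} x / a * F x"
        unfolding real_norm_def by (rule abs_of_nonneg)
      have n2: "indicator {l..u} x / a \<le> norm (indicator {l..u} x / a)" unfolding real_norm_def by (rule abs_ge_self)
      show "norm (indicator {-a/2<..<a/2} x / a * F x) \<le> norm (indicator {l..u} x / a)"
        using pw[of x] n1 n2 by linarith
    qed
  qed
  have "integral\<^sup>L (law_X a) F = (\<integral>x. indicator {-a/2<..<a/2} x / a * F x \<partial>lborel)"
    unfolding law_X_density[OF a]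
  proof (subst integral_density)
    show "AE x in lborel. 0 \<le> indicator {-a/2<..<a/2} x / a" using a by (intro AE_I2) (auto simp: indicator_def)
  qed (auto simp: a)
  also have "\<dots> \<le> (\<integral>x. indicator {l..u} x / a \<partial>lborel)"
    by (rule integral_mono[OF i1 i2 pw])
  also have "\<dots> = (u - l) / a" using lu by simp
  finally show "integral\<^sup>L (law_X a) F \<le> (u - l) / a" .
qed

lemma X_ind_left: assumes a: "0 < a" and w: "0 \<le> w"
  shows "integrable (law_X a) (\<lambda>x. indicator {..w} (x + a/2) :: real)" "(\<integral>x. indicator {..w} (x + a/2) \<partial>law_X a) \<le> w / a"
proof -
  have m: "(\<lambda>x::real. indicator {..w} (x + a/2) :: real) \<in> borel_measurable borel" by measurable
  note r = X_ind_gen[OF a _ m, of "-a/2" "w - a/2"]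
  show "integrable (law_X a) (\<lambda>x. indicator {..w} (x + a/2) :: real)" using r w by (auto simp: indicator_def)
  show "(\<integral>x. indicator {..w} (x + a/2) \<partial>law_X a) \<le> w / a" using r w by (auto simp: indicator_def)
qed

lemma X_ind_right: assumes a: "0 < a" and w: "0 \<le> w"
  shows "integrable (law_X a) (\<lambda>x. indicator {..w} (a/2 - x) :: real)" "(\<integral>x. indicator {..w} (a/2 - x) \<partial>law_X a) \<le> w / a"
proof -
  have m: "(\<lambda>x::real. indicator {..w} (a/2 - x) :: real) \<in> borel_measurable borel" by measurable
  note r = X_ind_gen[OF a _ m, of "a/2 - w" "a/2"]
  show "integrable (law_X a) (\<lambda>x. indicator {..w} (a/2 - x) :: real)" using r w by (auto simp: indicator_def)
  show "(\<integral>x. indicator {..w} (a/2 - x) \<partial>law_X a) \<le> w / a" using r w by (auto simp: indicator_def)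
qed


lemma ind_lt1: "(indicator A x :: real) < 1 \<Longrightarrow> x \<notin> A"
  by (auto simp: indicator_def split: if_splits)

lemma numeric:
  fixes t g e ES EB C0 Q \<alpha>' :: real
  assumes t0: "0 < t" and th: "t \<le> 1/2" and g0: "0 < g" and g1: "g \<le> 1" and g2: "g \<le> 2*\<alpha>'"
    and e: "e = t powr (g/4)" and C0: "0 \<le> C0" and Q: "0 \<le> Q"
    and ES: "ES \<le> t\<^sup>2 + C0 * t powr (2*\<alpha>') + 4*t"
    and EB: "EB \<le> 4*t^4 + e\<^sup>2 * 27 * Q / 2 + ES / (2*e\<^sup>2)"
  shows "EB \<le> (4 + 27*Q/2 + (5 + C0)/2) * e\<^sup>2" "0 < e" "e \<le> 1"
proof -
  have t1: "t \<le> 1" using th by simp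
  show e0: "0 < e" using t0 e by simp
  have e4: "e^4 = t powr g"
  proof -
    have "e^4 = t powr (of_nat 4 * (g/4))" unfolding e using t0 by (intro powr_power) simp
    then show ?thesis by simp
  qed
  show e1: "e \<le> 1" unfolding e using t0 t1 g0 by (intro powr_le1) auto
  have "t powr 1 \<le> t powr g" by (rule powr_mono'[OF g1]) (use t0 t1 in auto)
  then have tg: "t \<le> e^4" using e4 t0 by simp
  have "t powr (2*\<alpha>') \<le> t powr g" by (rule powr_mono'[OF g2]) (use t0 t1 in auto)
  then have tag: "t powr (2*\<alpha>') \<le> e^4" using e4 by simp
  have t2: "t\<^sup>2 \<le> t" using t0 t1 by (simp add: power2_eq_square mult_left_le)
  have "t^4 \<le> t^1" by (rule power_decreasing) (use t0 t1 in auto)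
  then have t4: "t^4 \<le> t" by simp
  have "ES \<le> e^4 + C0 * e^4 + 4 * e^4"
    using ES t2 tg tag mult_left_mono[OF tag C0] by linarith
  then have ES2: "ES \<le> (5 + C0) * e^4" by (simp add: algebra_simps)
  have e2pos: "0 < e\<^sup>2" using e0 by simp
  have "ES / (2*e\<^sup>2) \<le> (5 + C0) * e^4 / (2*e\<^sup>2)" using ES2 e2pos by (intro divide_right_mono) auto
  also have "(5 + C0) * e^4 / (2*e\<^sup>2) = (5 + C0)/2 * e\<^sup>2" using e0 by (simp add: field_simps eval_nat_numeral)
  finally have A: "ES / (2*e\<^sup>2) \<le> (5 + C0)/2 * e\<^sup>2" .
  have "e^4 \<le> e^2" by (rule power_decreasing) (use e0 e1 in auto)
  then have B: "4*t^4 \<le> 4*e\<^sup>2" using t4 tg by simp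
  show "EB \<le> (4 + 27*Q/2 + (5 + C0)/2) * e\<^sup>2"
  proof -
    have eq: "(4 + 27*Q/2 + (5 + C0)/2) * e\<^sup>2 = 4*e\<^sup>2 + e\<^sup>2 * 27 * Q / 2 + (5 + C0)/2 * e\<^sup>2"
      by (simp add: algebra_simps)
    show ?thesis using EB A B eq by linarith
  qed
qed

context fad
begin

definition "gam = min 1 (2*\<alpha>')"
definition "CS = 5 + c/\<alpha>'"
definition "Qc = 361 + L4"
definition "CB = 4 + 27*Qc/2 + CS/2"

lemma L4_nonneg: "0 \<le> L4" unfolding L4_def by (intro integral_nonneg_AE) (simp add: zero_le_even_power)

lemma gam: "0 < gam" "gam \<le> 1" "gam \<le> 2*\<alpha>'" using ap by (auto simp: gam_def)

context
  fixes a \<sigma> :: real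
  assumes a: "0 < a" and s: "0 < \<sigma>" and sa: "\<sigma> \<le> a"
begin

abbreviation "JJ \<equiv> joint_law a \<sigma> f"

lemma sets_JM'[measurable_cong]: "sets JJ = sets (borel \<Otimes>\<^sub>M (borel \<Otimes>\<^sub>M borel))"
  unfolding joint_law_def by (intro sets_pair_measure_cong sets_law_X sets_law_Z sets_law_H)

lemma EB2:
  fixes t :: real
  assumes t4: "t^4 = \<sigma>/a" and t0: "0 < t" and th: "t \<le> 1/2" and td: "t\<^sup>2 \<le> \<delta>"
  shows "integrable JJ (\<lambda>\<omega>. (Bf a \<sigma> \<omega>)\<^sup>2)" "(\<integral>\<omega>. (Bf a \<sigma> \<omega>)\<^sup>2 \<partial>JJ) \<le> CB * (t powr (gam/4))\<^sup>2"
proof -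
  interpret prob_space JJ by (rule pM[OF a s sa])
  define e where "e = t powr (gam/4)"
  define l where "l = e\<^sup>2"
  have e0: "0 < e" using t0 by (simp add: e_def)
  have l0: "0 < l" using e0 by (simp add: l_def)
  define w where "w = 2*\<sigma>/t^3"
  have w0: "0 \<le> w" using s t0 by (simp add: w_def)
  have wa: "w / a = 2*t"
  proof -
    have "w / a = 2 * (\<sigma>/a) / t^3" by (simp add: w_def)
    also have "\<dots> = 2 * t^4 / t^3" by (simp add: t4)
    also have "\<dots> = 2*t" using t0 by (simp add: eval_nat_numeral)
    finally show ?thesis .
  qed
  define S where "S = (\<lambda>\<omega>::real\<times>real\<times>real. t\<^sup>2 * ((fst (snd \<omega>))\<^sup>2 / \<sigma>\<^sup>2) + indicator {0<..<t\<^sup>2} (snd (snd \<omega>))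
      + indicator {..w} (fst \<omega> + a/2) + indicator {..w} (a/2 - fst \<omega>))"
  have z2: "integrable (law_Z \<sigma>) (\<lambda>z. t\<^sup>2 * (z\<^sup>2 / \<sigma>\<^sup>2))" "(\<integral>z. t\<^sup>2 * (z\<^sup>2 / \<sigma>\<^sup>2) \<partial>law_Z \<sigma>) = t\<^sup>2"
    using Z_mom2[OF s] s by auto
  have t2d: "0 < t\<^sup>2" using t0 by simp
  note sp = small_prob[OF pdf ap cp fs t2d td]
  note xl = X_ind_left[OF a w0] and xr = X_ind_right[OF a w0]
  note Lz = liftZ[OF a s sa z2(1)] and Lh = liftH[OF a s sa sp(1)]
    and Lxl = liftX[OF a s sa xl(1)] and Lxr = liftX[OF a s sa xr(1)]
  have Sint: "integrable JJ S" unfolding S_def using Lz(1) Lh(1) Lxl(1) Lxr(1) by simp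
  have "integral\<^sup>L JJ S = t\<^sup>2 + (\<integral>h. indicator {0<..<t\<^sup>2} h \<partial>law_H f)
      + (\<integral>x. indicator {..w} (x + a/2) \<partial>law_X a) + (\<integral>x. indicator {..w} (a/2 - x) \<partial>law_X a)"
    unfolding S_def using Lz Lh Lxl Lxr z2 s t0 by simp
  also have "\<dots> \<le> t\<^sup>2 + c / \<alpha>' * (t\<^sup>2) powr \<alpha>' + w/a + w/a"
    using sp(2) xl(2) xr(2) by linarith
  also have "(t\<^sup>2) powr \<alpha>' = t powr (2*\<alpha>')"
  proof -
    have "t\<^sup>2 = t powr 2" using t0 powr_realpow[of t 2] by simp
    then show ?thesis by (simp add: powr_powr)
  qed
  finally have ES: "integral\<^sup>L JJ S \<le> t\<^sup>2 + c/\<alpha>' * t powr (2*\<alpha>') + 4*t" using wa by simp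
  have Snn: "\<And>\<omega>. 0 \<le> S \<omega>" unfolding S_def by (auto simp: indicator_def)
  have pw: "AE \<omega> in JJ. (Bf a \<sigma> \<omega>)\<^sup>2 \<le> 4*t^4 + l * (27 * Psi \<sigma> \<omega>) / 2 + S \<omega> / (2*l)"
    using AEg[OF a s sa] B_AE[OF a s sa]
  proof eventually_elim
    fix \<omega> :: "real\<times>real\<times>real"
    assume w1: "-a/2 < fst \<omega> \<and> fst \<omega> < a/2 \<and> 0 < snd (snd \<omega>)" and w2: "0 \<le> Bf a \<sigma> \<omega> \<and> Bf a \<sigma> \<omega> \<le> Yf \<sigma> \<omega>"
    obtain x z h where o: "\<omega> = (x, z, h)" by (cases \<omega>) auto
    have x: "-a/2 < x" "x < a/2" and h: "0 < h" using w1 o by auto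
    have eB: "Bf a \<sigma> \<omega> = - ln (Pint a \<sigma> h (h*x + z))"
      unfolding Bf_def o using info_decomp[OF a h s x, of z] by simp
    have good: "Bf a \<sigma> \<omega> \<le> 2*t\<^sup>2" if S1: "S \<omega> < 1"
    proof -
      have i1: "0 \<le> t\<^sup>2 * (z\<^sup>2 / \<sigma>\<^sup>2)" by simp
      have i2: "0 \<le> (indicator {0<..<t\<^sup>2} h :: real)" "0 \<le> (indicator {..w} (x + a/2) :: real)"
        "0 \<le> (indicator {..w} (a/2 - x) :: real)" by auto
      have sum: "t\<^sup>2 * (z\<^sup>2 / \<sigma>\<^sup>2) + indicator {0<..<t\<^sup>2} h + indicator {..w} (x + a/2) + indicator {..w} (a/2 - x) < (1::real)"
        using S1 unfolding S_def o by simp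
      have c1: "t\<^sup>2 * (z\<^sup>2 / \<sigma>\<^sup>2) < 1" using sum i2 by linarith
      have "(indicator {0<..<t\<^sup>2} h :: real) < 1" using sum i1 i2 by linarith
      then have c2: "h \<notin> {0<..<t\<^sup>2}" by (rule ind_lt1)
      have "(indicator {..w} (x + a/2) :: real) < 1" using sum i1 i2 by linarith
      then have c3: "\<not> x + a/2 \<le> w" using ind_lt1 by fastforce
      have "(indicator {..w} (a/2 - x) :: real) < 1" using sum i1 i2 by linarith
      then have c4: "\<not> a/2 - x \<le> w" using ind_lt1 by fastforce
      have ht: "t\<^sup>2 \<le> h" using c2 h by auto
      define K where "K = 1/t"
      have K0: "0 < K" using t0 by (simp add: K_def)
      have KK: "K\<^sup>2 = 1/t\<^sup>2" by (simp add: K_def power_divide)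
      have "t\<^sup>2 \<le> 1/4" using th t0 power_mono[of t "1/2" 2] by (simp add: power_divide)
      then have K2: "2 \<le> K\<^sup>2" unfolding KK using t2d by (simp add: field_simps)
      have "z\<^sup>2 < \<sigma>\<^sup>2 / t\<^sup>2" using c1 t2d s by (simp add: field_simps)
      also have "\<sigma>\<^sup>2 / t\<^sup>2 = (K*\<sigma>)\<^sup>2" by (simp add: K_def power_divide power_mult_distrib)
      finally have "z\<^sup>2 < (K*\<sigma>)\<^sup>2" .
      then have zK: "\<bar>z\<bar> \<le> K*\<sigma>" using K0 s by (metis abs_le_square_iff abs_of_pos less_imp_le mult_pos_pos)
      have KsW: "2*K*\<sigma> = t\<^sup>2 * w" unfolding K_def w_def using t0 by (simp add: field_simps eval_nat_numeral)
      have g1: "2*K*\<sigma> < h*(x + a/2)"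
      proof -
        have "t\<^sup>2 * w < t\<^sup>2 * (x + a/2)" using c3 t2d by simp
        also have "\<dots> \<le> h * (x + a/2)" using ht x by (intro mult_right_mono) auto
        finally show ?thesis using KsW by simp
      qed
      have g2: "2*K*\<sigma> < h*(a/2 - x)"
      proof -
        have "t\<^sup>2 * w < t\<^sup>2 * (a/2 - x)" using c4 t2d by simp
        also have "\<dots> \<le> h * (a/2 - x)" using ht x by (intro mult_right_mono) auto
        finally show ?thesis using KsW by simp
      qed
      have "- ln (Pint a \<sigma> h (h*x + z)) \<le> 2 / K\<^sup>2" by (rule B_good[OF a h s x K2 K0 zK g1 g2])
      then show ?thesis unfolding eB KK by simp
    qed
    have "(Bf a \<sigma> \<omega>)\<^sup>2 \<le> 4*t^4 + l * (Yf \<sigma> \<omega>)^4 / 2 + S \<omega> / (2*l)"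
      by (rule sq_bound) (use w2 Snn l0 good in auto)
    moreover have "l * (Yf \<sigma> \<omega>)^4 / 2 \<le> l * (27 * Psi \<sigma> \<omega>) / 2"
      using Y4[of \<sigma> \<omega>] l0 by (intro divide_right_mono mult_left_mono) auto
    ultimately show "(Bf a \<sigma> \<omega>)\<^sup>2 \<le> 4*t^4 + l * (27 * Psi \<sigma> \<omega>) / 2 + S \<omega> / (2*l)" by linarith
  qed
  note Ps = Psi_int[OF a s sa]
  have Rint: "integrable JJ (\<lambda>\<omega>. 4*t^4 + l * (27 * Psi \<sigma> \<omega>) / 2 + S \<omega> / (2*l))"
    using Ps(1) Sint by simp
  have mB2: "(\<lambda>\<omega>. (Bf a \<sigma> \<omega>)\<^sup>2) \<in> borel_measurable JJ" using mBf[OF a s sa] by measurable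
  show iB2: "integrable JJ (\<lambda>\<omega>. (Bf a \<sigma> \<omega>)\<^sup>2)"
  proof (rule Bochner_Integration.integrable_bound[OF Rint mB2])
    show "AE x in JJ. norm ((Bf a \<sigma> x)\<^sup>2) \<le> norm (4*t^4 + l * (27 * Psi \<sigma> x) / 2 + S x / (2*l))"
      using pw by eventually_elim (simp add: abs_le_iff)
  qed
  have "(\<integral>\<omega>. (Bf a \<sigma> \<omega>)\<^sup>2 \<partial>JJ) \<le> (\<integral>\<omega>. 4*t^4 + l * (27 * Psi \<sigma> \<omega>) / 2 + S \<omega> / (2*l) \<partial>JJ)"
    by (rule integral_mono_AE[OF iB2 Rint pw])
  also have "\<dots> = 4*t^4 + l * 27 * Qc / 2 + integral\<^sup>L JJ S / (2*l)"
    using Ps Sint by (simp add: prob_space Qc_def)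
  finally have EB: "(\<integral>\<omega>. (Bf a \<sigma> \<omega>)\<^sup>2 \<partial>JJ) \<le> 4*t^4 + e\<^sup>2 * 27 * Qc / 2 + integral\<^sup>L JJ S / (2*e\<^sup>2)"
    by (simp add: l_def)
  have "(\<integral>\<omega>. (Bf a \<sigma> \<omega>)\<^sup>2 \<partial>JJ) \<le> (4 + 27*Qc/2 + (5 + c/\<alpha>')/2) * e\<^sup>2"
    by (rule numeric(1)[OF t0 th gam e_def _ _ ES EB]) (use cp ap L4_nonneg in \<open>auto simp: Qc_def\<close>)
  then show "(\<integral>\<omega>. (Bf a \<sigma> \<omega>)\<^sup>2 \<partial>JJ) \<le> CB * (t powr (gam/4))\<^sup>2"
    by (simp add: CB_def CS_def e_def)
qed

end
end


lemma amgm_e: fixes U V e :: real assumes e: "0 < e" shows "\<bar>2*U*V\<bar> \<le> e*U\<^sup>2 + V\<^sup>2/e"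
proof -
  have "0 \<le> (e*\<bar>U\<bar> - \<bar>V\<bar>)\<^sup>2" by simp
  then have "2*e*(\<bar>U\<bar>*\<bar>V\<bar>) \<le> e\<^sup>2*U\<^sup>2 + V\<^sup>2" by (simp add: power2_eq_square algebra_simps abs_mult_self_eq)
  then have "2*(\<bar>U\<bar>*\<bar>V\<bar>) \<le> (e\<^sup>2*U\<^sup>2 + V\<^sup>2)/e" using e by (simp add: field_simps)
  also have "(e\<^sup>2*U\<^sup>2 + V\<^sup>2)/e = e*U\<^sup>2 + V\<^sup>2/e" using e by (simp add: field_simps power2_eq_square)
  finally show ?thesis by (simp add: abs_mult)
qed

lemma aux_abs: "0 \<le> q \<Longrightarrow> 0 \<le> l \<Longrightarrow> \<bar>1/2 - q/2\<bar> \<le> 4 + q + (l::real)"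
  by arith

lemma aux_abs2: "\<bar>C\<bar> \<le> e * A + D / e \<Longrightarrow> A = VG + 1/2 \<Longrightarrow> X = A + C + D \<Longrightarrow> D / e \<le> CB * e \<Longrightarrow>
   D \<le> CB * e \<Longrightarrow> 0 \<le> D \<Longrightarrow> e * A \<le> (1/2 + L2) * e \<Longrightarrow>
   (1/2 + L2 + 2*CB) * e = (1/2 + L2) * e + CB * e + CB * e \<Longrightarrow> \<bar>X - (1/2 + VG)\<bar> \<le> (1/2 + L2 + 2*CB) * (e::real)"
  by arith

lemma half_bound: fixes B e :: real assumes e: "0 < e" shows "B \<le> (e + B\<^sup>2/e)/2"
proof -
  have "0 \<le> (B - e)\<^sup>2" by simp
  then have "2*e*B \<le> B\<^sup>2 + e\<^sup>2" by (simp add: power2_eq_square algebra_simps)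
  then have "2*B \<le> (B\<^sup>2 + e\<^sup>2)/e" using e by (simp add: field_simps)
  also have "(B\<^sup>2 + e\<^sup>2)/e = B\<^sup>2/e + e" using e by (simp add: field_simps power2_eq_square)
  finally show ?thesis by simp
qed

context fad
begin

context
  fixes a \<sigma> :: real
  assumes a: "0 < a" and s: "0 < \<sigma>" and sa: "\<sigma> \<le> a"
begin

abbreviation "JK \<equiv> joint_law a \<sigma> f"

lemma sets_JK[measurable_cong]: "sets JK = sets (borel \<Otimes>\<^sub>M (borel \<Otimes>\<^sub>M borel))"
  unfolding joint_law_def by (intro sets_pair_measure_cong sets_law_X sets_law_Z sets_law_H)

lemma main_est:
  fixes t :: real
  assumes t4: "t^4 = \<sigma>/a" and t0: "0 < t" and th: "t \<le> 1/2" and td: "t\<^sup>2 \<le> \<delta>"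
  defines "e \<equiv> t powr (gam/4)"
  shows "integrable JK (info_rv a \<sigma>)"
    "integrable JK (\<lambda>\<omega>. Tf a \<sigma> (snd (snd \<omega>)))"
    "\<bar>(\<integral>\<omega>. info_rv a \<sigma> \<omega> \<partial>JK) - (\<integral>\<omega>. Tf a \<sigma> (snd (snd \<omega>)) \<partial>JK)\<bar> \<le> (1 + CB)/2 * e"
    "integrable JK (\<lambda>\<omega>. (info_rv a \<sigma> \<omega> - (\<integral>\<omega>. info_rv a \<sigma> \<omega> \<partial>JK))\<^sup>2)"
    "\<bar>(\<integral>\<omega>. (info_rv a \<sigma> \<omega> - (\<integral>\<omega>. info_rv a \<sigma> \<omega> \<partial>JK))\<^sup>2 \<partial>JK)
        - (1/2 + (\<integral>h. (gf \<sigma> h - integral\<^sup>L (law_H f) (gf \<sigma>))\<^sup>2 \<partial>law_H f))\<bar> \<le> (1/2 + L2 + 2*CB) * e"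
    "integrable JK (\<lambda>\<omega>. \<bar>info_rv a \<sigma> \<omega> - (\<integral>\<omega>. info_rv a \<sigma> \<omega> \<partial>JK)\<bar> ^ 3)"
    "0 < e" "e \<le> 1"
proof -
  interpret prob_space JK by (rule pM[OF a s sa])
  note ebb = EB2[OF a s sa t4 t0 th td]
  have eB2: "(\<integral>\<omega>. (Bf a \<sigma> \<omega>)\<^sup>2 \<partial>JK) \<le> CB * e\<^sup>2" using ebb(2) by (simp add: e_def)
  have e0: "0 < e" unfolding e_def using t0 by simp
  show "0 < e" by (rule e0)
  have e1: "e \<le> 1" unfolding e_def using t0 th gam by (intro powr_le1) auto
  show "e \<le> 1" by (rule e1)
  let ?i = "info_rv a \<sigma>"
  let ?B = "Bf a \<sigma>"
  let ?T = "\<lambda>\<omega>. Tf a \<sigma> (snd (snd \<omega>))"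
  let ?W = "\<lambda>\<omega>. Wf \<sigma> (fst (snd \<omega>))"
  have mi[measurable]: "?i \<in> borel_measurable JK" by (rule info_meas[OF a])
  have mB[measurable]: "?B \<in> borel_measurable JK" by (rule mBf[OF a s sa])
  have decomp: "\<And>\<omega>. ?i \<omega> = ?T \<omega> + ?W \<omega> + ?B \<omega>" by (simp add: Bf_def)
  note TH = Tf_facts[OF a s] and GH = gf_facts[OF s] and WZ = W_facts[OF s]
  note LT = liftH[OF a s sa TH(1)] and LW = liftZ[OF a s sa WZ(1)] and LW2 = liftZ[OF a s sa WZ(3)]
  note Ps = Psi_int[OF a s sa]
  have iB: "integrable JK ?B"
  proof (rule dom_int[OF Ps(1) mB, of 27])
    show "AE x in JK. \<bar>?B x\<bar> \<le> 27 * Psi \<sigma> x"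
      using B_AE[OF a s sa]
    proof eventually_elim
      fix x :: "real\<times>real\<times>real" assume "0 \<le> ?B x \<and> ?B x \<le> Yf \<sigma> x"
      then show "\<bar>?B x\<bar> \<le> 27 * Psi \<sigma> x" using Ypow(1)[OF s, of x] by (simp add: abs_le_iff)
    qed
  qed
  have BAE: "AE \<omega> in JK. 0 \<le> ?B \<omega>" using B_AE[OF a s sa] by eventually_elim auto
  show ii: "integrable JK ?i" unfolding decomp using LT(1) LW(1) iB by simp
  show "integrable JK ?T" by (rule LT(1))
  define EB where "EB = (\<integral>\<omega>. ?B \<omega> \<partial>JK)"
  define Ig where "Ig = integral\<^sup>L (law_H f) (gf \<sigma>)"
  have Ieq: "(\<integral>\<omega>. ?i \<omega> \<partial>JK) = (\<integral>\<omega>. ?T \<omega> \<partial>JK) + EB"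
    unfolding decomp using LT(1) LW iB WZ(2) by (simp add: EB_def)
  have ET: "(\<integral>\<omega>. ?T \<omega> \<partial>JK) = Ig + ln a" using LT(2) TH(2) by (simp add: Ig_def)
  have EB0: "0 \<le> EB" unfolding EB_def by (rule integral_nonneg_AE[OF BAE])
  have EBle: "EB \<le> (1 + CB)/2 * e"
  proof -
    have i2: "integrable JK (\<lambda>\<omega>. (e + (?B \<omega>)\<^sup>2/e)/2)" using ebb(1) by simp
    have "EB \<le> (\<integral>\<omega>. (e + (?B \<omega>)\<^sup>2/e)/2 \<partial>JK)" unfolding EB_def
      by (rule integral_mono[OF iB i2]) (rule half_bound[OF e0])
    also have "\<dots> = (e + (\<integral>\<omega>. (?B \<omega>)\<^sup>2 \<partial>JK)/e)/2" using ebb(1) by (simp add: prob_space)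
    also have "\<dots> \<le> (e + CB * e\<^sup>2/e)/2" using eB2 e0 by (intro divide_right_mono add_left_mono) auto
    also have "\<dots> = (1 + CB)/2 * e" using e0 by (simp add: field_simps power2_eq_square)
    finally show ?thesis .
  qed
  show "\<bar>(\<integral>\<omega>. ?i \<omega> \<partial>JK) - (\<integral>\<omega>. ?T \<omega> \<partial>JK)\<bar> \<le> (1 + CB)/2 * e"
    using Ieq EB0 EBle by simp
  define I where "I = (\<integral>\<omega>. ?i \<omega> \<partial>JK)"
  define G where "G = (\<lambda>h. gf \<sigma> h - Ig)"
  define U where "U = (\<lambda>\<omega>::real\<times>real\<times>real. G (snd (snd \<omega>)) + Wf \<sigma> (fst (snd \<omega>)))"
  define V where "V = (\<lambda>\<omega>. ?B \<omega> - EB)"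
  have mG[measurable]: "G \<in> borel_measurable borel" unfolding G_def gf_def by measurable
  have mU[measurable]: "U \<in> borel_measurable JK" unfolding U_def Wf_def by measurable
  have mV[measurable]: "V \<in> borel_measurable JK" unfolding V_def by measurable
  have aeUV: "AE \<omega> in JK. ?i \<omega> - I = U \<omega> + V \<omega>"
    using AEg[OF a s sa]
  proof eventually_elim
    fix \<omega> :: "real\<times>real\<times>real" assume "-a/2 < fst \<omega> \<and> fst \<omega> < a/2 \<and> 0 < snd (snd \<omega>)"
    then have h: "0 < snd (snd \<omega>)" by simp
    show "?i \<omega> - I = U \<omega> + V \<omega>"
      unfolding decomp I_def Ieq ET U_def V_def G_def using Tf_gf[OF a h s] by simp
  qed
  have G2: "integrable (law_H f) (\<lambda>h. (G h)\<^sup>2)" using GH(3) by (simp add: G_def Ig_def)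
  have G2i: "(\<integral>h. (G h)\<^sup>2 \<partial>law_H f) = (\<integral>h. (gf \<sigma> h - integral\<^sup>L (law_H f) (gf \<sigma>))\<^sup>2 \<partial>law_H f)"
    by (simp add: G_def Ig_def)
  have G0: "integral\<^sup>L (law_H f) G = 0"
  proof -
    interpret pH: prob_space "law_H f" by (rule pH)
    show ?thesis using GH(1) by (simp add: G_def Ig_def pH.prob_space)
  qed
  note LG2 = liftH[OF a s sa G2]
  have mW: "Wf \<sigma> \<in> borel_measurable (law_Z \<sigma>)" unfolding Wf_def by measurable
  have mGH: "G \<in> borel_measurable (law_H f)" unfolding G_def gf_def by measurable
  note PZ' = int_prod_zero[OF pZ[OF a s sa] pH WZ(3) G2 mW mGH G0]
  note LP = liftZH[OF a s sa PZ'(1)]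
  have eU2: "(\<lambda>\<omega>. (U \<omega>)\<^sup>2) = (\<lambda>\<omega>. (G (snd (snd \<omega>)))\<^sup>2 + 2 * (Wf \<sigma> (fst (snd \<omega>)) * G (snd (snd \<omega>))) + (Wf \<sigma> (fst (snd \<omega>)))\<^sup>2)"
    by (auto simp: U_def fun_eq_iff power2_eq_square algebra_simps)
  have iU2: "integrable JK (\<lambda>\<omega>. (U \<omega>)\<^sup>2)" unfolding eU2 using LG2(1) LP(1) LW2(1) by simp
  have EU2: "(\<integral>\<omega>. (U \<omega>)\<^sup>2 \<partial>JK) = (\<integral>h. (G h)\<^sup>2 \<partial>law_H f) + 1/2"
    unfolding eU2 using LG2 LP LW2 PZ'(2) WZ(4) by simp
  have eV2: "(\<lambda>\<omega>. (V \<omega>)\<^sup>2) = (\<lambda>\<omega>. (?B \<omega>)\<^sup>2 - 2 * EB * ?B \<omega> + EB\<^sup>2)"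
    by (auto simp: V_def fun_eq_iff power2_eq_square algebra_simps)
  have iV2: "integrable JK (\<lambda>\<omega>. (V \<omega>)\<^sup>2)" unfolding eV2 using ebb(1) iB by simp
  have EV2: "(\<integral>\<omega>. (V \<omega>)\<^sup>2 \<partial>JK) \<le> CB * e\<^sup>2"
  proof -
    have "(\<integral>\<omega>. (V \<omega>)\<^sup>2 \<partial>JK) = (\<integral>\<omega>. (?B \<omega>)\<^sup>2 \<partial>JK) - 2 * EB * EB + EB\<^sup>2"
      unfolding eV2 using ebb(1) iB by (simp add: prob_space EB_def)
    also have "\<dots> \<le> (\<integral>\<omega>. (?B \<omega>)\<^sup>2 \<partial>JK)" by (simp add: power2_eq_square)
    finally show ?thesis using eB2 by simp
  qed
  have iUV: "integrable JK (\<lambda>\<omega>. 2 * U \<omega> * V \<omega>)"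
  proof (rule dom_int[of _ "\<lambda>\<omega>. (U \<omega>)\<^sup>2 + (V \<omega>)\<^sup>2" _ 2])
    show "integrable JK (\<lambda>\<omega>. (U \<omega>)\<^sup>2 + (V \<omega>)\<^sup>2)" using iU2 iV2 by simp
    show "(\<lambda>\<omega>. 2 * U \<omega> * V \<omega>) \<in> borel_measurable JK" by measurable
    show "AE x in JK. \<bar>2 * U x * V x\<bar> \<le> 2 * ((U x)\<^sup>2 + (V x)\<^sup>2)"
    proof (rule AE_I2)
      fix x
      have "\<bar>U x * V x\<bar> \<le> (U x)\<^sup>2 + (V x)\<^sup>2" by (rule absmul_le)
      then show "\<bar>2 * U x * V x\<bar> \<le> 2 * ((U x)\<^sup>2 + (V x)\<^sup>2)" by (simp add: abs_mult)
    qed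
  qed
  have mIV: "(\<lambda>\<omega>. (?i \<omega> - I)\<^sup>2) \<in> borel_measurable JK" by measurable
  have aeUV2: "AE \<omega> in JK. (?i \<omega> - I)\<^sup>2 = (U \<omega>)\<^sup>2 + (2 * U \<omega> * V \<omega> + (V \<omega>)\<^sup>2)"
    using aeUV by eventually_elim (simp add: power2_eq_square algebra_simps)
  have iS: "integrable JK (\<lambda>\<omega>. (U \<omega>)\<^sup>2 + (2 * U \<omega> * V \<omega> + (V \<omega>)\<^sup>2))" using iU2 iUV iV2 by simp
  show "integrable JK (\<lambda>\<omega>. (?i \<omega> - (\<integral>\<omega>. ?i \<omega> \<partial>JK))\<^sup>2)"
    unfolding I_def[symmetric]
    by (rule integrable_cong_AE_imp[OF iS mIV]) (use aeUV2 in \<open>eventually_elim, simp\<close>)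
  have EE: "(\<integral>\<omega>. (?i \<omega> - I)\<^sup>2 \<partial>JK) = (\<integral>\<omega>. (U \<omega>)\<^sup>2 \<partial>JK) + (\<integral>\<omega>. 2 * U \<omega> * V \<omega> \<partial>JK) + (\<integral>\<omega>. (V \<omega>)\<^sup>2 \<partial>JK)"
  proof -
    have "(\<integral>\<omega>. (?i \<omega> - I)\<^sup>2 \<partial>JK) = (\<integral>\<omega>. (U \<omega>)\<^sup>2 + (2 * U \<omega> * V \<omega> + (V \<omega>)\<^sup>2) \<partial>JK)"
      by (rule integral_cong_AE[OF mIV _ aeUV2]) (use iS in auto)
    also have "\<dots> = (\<integral>\<omega>. (U \<omega>)\<^sup>2 \<partial>JK) + (\<integral>\<omega>. 2 * U \<omega> * V \<omega> \<partial>JK) + (\<integral>\<omega>. (V \<omega>)\<^sup>2 \<partial>JK)"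
      using iU2 iUV iV2 by simp
    finally show ?thesis .
  qed
  have cross: "\<bar>\<integral>\<omega>. 2 * U \<omega> * V \<omega> \<partial>JK\<bar> \<le> e * (\<integral>\<omega>. (U \<omega>)\<^sup>2 \<partial>JK) + (\<integral>\<omega>. (V \<omega>)\<^sup>2 \<partial>JK) / e"
  proof -
    have i3: "integrable JK (\<lambda>\<omega>. e * (U \<omega>)\<^sup>2 + (V \<omega>)\<^sup>2 / e)" using iU2 iV2 by simp
    have "\<bar>\<integral>\<omega>. 2 * U \<omega> * V \<omega> \<partial>JK\<bar> \<le> (\<integral>\<omega>. \<bar>2 * U \<omega> * V \<omega>\<bar> \<partial>JK)"
      by (rule integral_abs_bound)
    also have "\<dots> \<le> (\<integral>\<omega>. e * (U \<omega>)\<^sup>2 + (V \<omega>)\<^sup>2 / e \<partial>JK)"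
      by (rule integral_mono[OF _ i3]) (use iUV amgm_e[OF e0] in auto)
    also have "\<dots> = e * (\<integral>\<omega>. (U \<omega>)\<^sup>2 \<partial>JK) + (\<integral>\<omega>. (V \<omega>)\<^sup>2 \<partial>JK) / e" using iU2 iV2 by simp
    finally show ?thesis .
  qed
  define VG where "VG = (\<integral>h. (gf \<sigma> h - integral\<^sup>L (law_H f) (gf \<sigma>))\<^sup>2 \<partial>law_H f)"
  have VG0: "0 \<le> VG" unfolding VG_def by (rule integral_nonneg_AE) simp
  have VGL: "VG \<le> L2" unfolding VG_def by (rule GH(4))
  have EU2': "(\<integral>\<omega>. (U \<omega>)\<^sup>2 \<partial>JK) = VG + 1/2" using EU2 G2i by (simp add: VG_def)
  have EV0: "0 \<le> (\<integral>\<omega>. (V \<omega>)\<^sup>2 \<partial>JK)" by (rule integral_nonneg_AE) simp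
  have EV2e: "(\<integral>\<omega>. (V \<omega>)\<^sup>2 \<partial>JK) / e \<le> CB * e"
  proof -
    have "(\<integral>\<omega>. (V \<omega>)\<^sup>2 \<partial>JK) / e \<le> CB * e\<^sup>2 / e" using EV2 e0 by (intro divide_right_mono) auto
    also have "\<dots> = CB * e" using e0 by (simp add: power2_eq_square)
    finally show ?thesis .
  qed
  have CB0: "0 \<le> CB" using cp ap L4_nonneg by (simp add: CB_def Qc_def CS_def)
  have EV2b: "(\<integral>\<omega>. (V \<omega>)\<^sup>2 \<partial>JK) \<le> CB * e"
  proof -
    have "CB * e\<^sup>2 \<le> CB * e" using e0 e1 CB0 by (intro mult_left_mono) (auto simp: power2_eq_square mult_le_cancel_left1)
    then show ?thesis using EV2 by linarith
  qed
  have eU: "e * (VG + 1/2) \<le> (1/2 + L2) * e" using VGL e0 by (simp add: algebra_simps mult_left_mono)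
  show "\<bar>(\<integral>\<omega>. (?i \<omega> - (\<integral>\<omega>. ?i \<omega> \<partial>JK))\<^sup>2 \<partial>JK)
        - (1/2 + (\<integral>h. (gf \<sigma> h - integral\<^sup>L (law_H f) (gf \<sigma>))\<^sup>2 \<partial>law_H f))\<bar> \<le> (1/2 + L2 + 2*CB) * e"
  proof -
    define X where "X = (\<integral>\<omega>. (?i \<omega> - I)\<^sup>2 \<partial>JK)"
    define A where "A = (\<integral>\<omega>. (U \<omega>)\<^sup>2 \<partial>JK)"
    define C where "C = (\<integral>\<omega>. 2 * U \<omega> * V \<omega> \<partial>JK)"
    define D where "D = (\<integral>\<omega>. (V \<omega>)\<^sup>2 \<partial>JK)"
    have f1: "X = A + C + D" using EE by (simp add: X_def A_def C_def D_def)
    have f2: "A = VG + 1/2" using EU2' by (simp add: A_def)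
    have f3: "\<bar>C\<bar> \<le> e * A + D / e" using cross by (simp add: A_def C_def D_def)
    have f4: "D / e \<le> CB * e" using EV2e by (simp add: D_def)
    have f5: "D \<le> CB * e" using EV2b by (simp add: D_def)
    have f6: "0 \<le> D" using EV0 by (simp add: D_def)
    have f7: "e * A \<le> (1/2 + L2) * e" using eU f2 by simp
    have f8: "(1/2 + L2 + 2*CB) * e = (1/2 + L2) * e + CB * e + CB * e" by (simp add: algebra_simps)
    have "\<bar>X - (1/2 + VG)\<bar> \<le> (1/2 + L2 + 2*CB) * e"
      by (rule aux_abs2[OF f3 f2 f1 f4 f5 f6 f7 f8])
    then show ?thesis by (simp add: X_def I_def VG_def)
  qed
  define kT where "kT = \<bar>ln a\<bar> + \<bar>ln (2*pi*\<sigma>\<^sup>2)\<bar>/2 + 1/2 + \<bar>I\<bar> + 3"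
  have kT1: "1 \<le> kT" by (simp add: kT_def)
  have mC: "(\<lambda>\<omega>. \<bar>?i \<omega> - I\<bar> ^ 3) \<in> borel_measurable JK" by measurable
  have "integrable JK (\<lambda>\<omega>. \<bar>?i \<omega> - I\<bar> ^ 3)"
  proof (rule dom_int[OF Ps(1) mC, of "kT^3 * 27"])
    show "AE \<omega> in JK. \<bar>\<bar>?i \<omega> - I\<bar> ^ 3\<bar> \<le> kT^3 * 27 * Psi \<sigma> \<omega>"
      using AEg[OF a s sa] B_AE[OF a s sa]
    proof eventually_elim
      fix \<omega> :: "real\<times>real\<times>real"
      assume w1: "-a/2 < fst \<omega> \<and> fst \<omega> < a/2 \<and> 0 < snd (snd \<omega>)" and w2: "0 \<le> ?B \<omega> \<and> ?B \<omega> \<le> Yf \<sigma> \<omega>"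
      have h: "0 < snd (snd \<omega>)" using w1 by simp
      have Y1: "1 \<le> Yf \<sigma> \<omega>" by (rule Y_ge1[OF s])
      have lh: "\<bar>ln (snd (snd \<omega>))\<bar> \<le> Yf \<sigma> \<omega>" by (simp add: Yf_def)
      have T: "\<bar>?T \<omega>\<bar> \<le> \<bar>ln a\<bar> + \<bar>ln (2*pi*\<sigma>\<^sup>2)\<bar>/2 + 1/2 + \<bar>ln (snd (snd \<omega>))\<bar>"
        using Tf_eq[OF a h s] a h by (simp add: ln_mult_pos)
      have W: "\<bar>?W \<omega>\<bar> \<le> Yf \<sigma> \<omega>"
      proof -
        have q0: "0 \<le> (fst (snd \<omega>))\<^sup>2 / \<sigma>\<^sup>2" by simp
        have e2: "(fst (snd \<omega>))\<^sup>2 / (2 * \<sigma>\<^sup>2) = (fst (snd \<omega>))\<^sup>2 / \<sigma>\<^sup>2 / 2" by simp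
        have l0: "0 \<le> \<bar>ln (snd (snd \<omega>))\<bar>" by simp
        show ?thesis unfolding Wf_def Yf_def e2 using aux_abs[OF q0 l0] by simp
      qed
      have "\<bar>?i \<omega> - I\<bar> \<le> \<bar>?T \<omega>\<bar> + \<bar>?W \<omega>\<bar> + \<bar>?B \<omega>\<bar> + \<bar>I\<bar>" unfolding decomp by linarith
      also have "\<dots> \<le> kT * Yf \<sigma> \<omega>"
      proof -
        have "(kT - 3) * 1 \<le> (kT - 3) * Yf \<sigma> \<omega>" using Y1 kT1 by (intro mult_left_mono) (auto simp: kT_def)
        then have m: "kT - 3 \<le> (kT - 3) * Yf \<sigma> \<omega>" by simp
        have d: "kT * Yf \<sigma> \<omega> = (kT - 3) * Yf \<sigma> \<omega> + 3 * Yf \<sigma> \<omega>" by (simp add: algebra_simps)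
        have k3: "kT - 3 = \<bar>ln a\<bar> + \<bar>ln (2*pi*\<sigma>\<^sup>2)\<bar>/2 + 1/2 + \<bar>I\<bar>" by (simp add: kT_def)
        have Bab: "\<bar>?B \<omega>\<bar> \<le> Yf \<sigma> \<omega>" using w2 by simp
        show ?thesis using T W Bab lh m d k3 by linarith
      qed
      finally have "\<bar>?i \<omega> - I\<bar> \<le> kT * Yf \<sigma> \<omega>" .
      then have "\<bar>?i \<omega> - I\<bar> ^ 3 \<le> (kT * Yf \<sigma> \<omega>) ^ 3" by (intro power_mono) auto
      also have "\<dots> = kT^3 * (Yf \<sigma> \<omega>)^3" by (simp add: power_mult_distrib)
      also have "\<dots> \<le> kT^3 * (27 * Psi \<sigma> \<omega>)" using Ypow(3)[OF s] kT1 by (intro mult_left_mono) auto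
      finally show "\<bar>\<bar>?i \<omega> - I\<bar> ^ 3\<bar> \<le> kT^3 * 27 * Psi \<sigma> \<omega>" by simp
    qed
  qed
  then show "integrable JK (\<lambda>\<omega>. \<bar>?i \<omega> - (\<integral>\<omega>. ?i \<omega> \<partial>JK)\<bar> ^ 3)" by (simp add: I_def)
qed

end
end


theorem lemma4p6:
  fixes f :: "real \<Rightarrow> real"
  assumes reg: "regular_fading f"
    and second_moment: "integrable (law_H f) (\<lambda>h. h\<^sup>2)" "(\<integral>h. h\<^sup>2 \<partial>law_H f) = 1"
  shows "\<exists>\<alpha>::real. 0 < \<alpha> \<and> \<alpha> \<le> 1 \<and> (\<exists>C R::real. \<forall>a \<sigma>::real. 0 < a \<longrightarrow> 0 < \<sigma> \<longrightarrow> R \<le> a / \<sigma> \<longrightarrow>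
     (let M = joint_law a \<sigma> f;
          i = info_rv a \<sigma>;
          I = (\<integral>\<omega>. i \<omega> \<partial>M);
          g = (\<lambda>h. ln (h\<^sup>2 / (2 * pi * exp 1 * \<sigma>\<^sup>2)) / 2)
      in integrable M i
       \<and> integrable M (\<lambda>\<omega>. (\<lambda>(x, z, h). ln (a\<^sup>2 * h\<^sup>2 / (2 * pi * exp 1 * \<sigma>\<^sup>2)) / 2) \<omega>)
       \<and> \<bar>I - (\<integral>\<omega>. (\<lambda>(x, z, h). ln (a\<^sup>2 * h\<^sup>2 / (2 * pi * exp 1 * \<sigma>\<^sup>2)) / 2) \<omega> \<partial>M)\<bar>
            \<le> C * (\<sigma> / a) powr \<alpha>
       \<and> integrable M (\<lambda>\<omega>. (i \<omega> - I)\<^sup>2)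
       \<and> integrable (law_H f) (\<lambda>h. (g h - (\<integral>h'. g h' \<partial>law_H f))\<^sup>2)
       \<and> \<bar>(\<integral>\<omega>. (i \<omega> - I)\<^sup>2 \<partial>M)
            - (1/2 + (\<integral>h. (g h - (\<integral>h'. g h' \<partial>law_H f))\<^sup>2 \<partial>law_H f))\<bar>
            \<le> C * (\<sigma> / a) powr (\<alpha> / 2)
       \<and> integrable M (\<lambda>\<omega>. \<bar>i \<omega> - I\<bar> ^ 3)))"
proof -
  have pdf: "is_pdf_nonneg f" using reg by (simp add: regular_fading_def)
  obtain \<alpha>' c \<delta> where ap: "0 < \<alpha>'" and cp: "0 < c" and dp: "0 < \<delta>"
    and fs0: "\<forall>h. 0 < h \<and> h < \<delta> \<longrightarrow> f h = c * h powr (\<alpha>' - 1)"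
    using reg unfolding regular_fading_def by blast
  have fs: "\<And>h. 0 < h \<Longrightarrow> h < \<delta> \<Longrightarrow> f h = c * h powr (\<alpha>' - 1)" using fs0 by blast
  interpret F: fad f \<alpha>' c \<delta>
    by unfold_locales (use pdf ap cp dp fs second_moment(1) in auto)
  define \<alpha> where "\<alpha> = F.gam / 16"
  define C where "C = max ((1 + F.CB)/2) (1/2 + F.L2 + 2*F.CB)"
  define R where "R = max 16 (1/\<delta>\<^sup>2)"
  have CB0: "0 \<le> F.CB" using cp ap F.L4_nonneg by (simp add: F.CB_def F.Qc_def F.CS_def)
  have C0: "0 \<le> C" using CB0 unfolding C_def by (simp add: le_max_iff_disj)
  have \<alpha>0: "0 < \<alpha>" and \<alpha>1: "\<alpha> \<le> 1" using F.gam by (auto simp: \<alpha>_def)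
  show ?thesis
  proof (intro exI conjI allI impI)
    show "0 < \<alpha>" by (rule \<alpha>0)
    show "\<alpha> \<le> 1" by (rule \<alpha>1)
    fix a \<sigma> :: real
    assume a: "0 < a" and s: "0 < \<sigma>" and Ra: "R \<le> a / \<sigma>"
    define \<rho> where "\<rho> = \<sigma> / a"
    have \<rho>0: "0 < \<rho>" using a s by (simp add: \<rho>_def)
    have r16: "16 \<le> a/\<sigma>" and rd: "1/\<delta>\<^sup>2 \<le> a/\<sigma>" using Ra by (auto simp: R_def)
    have \<rho>inv: "\<rho> = 1 / (a/\<sigma>)" by (simp add: \<rho>_def)
    have \<rho>16: "\<rho> \<le> 1/16"
    proof -
      have "1 / (a/\<sigma>) \<le> 1 / 16" using r16 a s by (intro divide_left_mono) auto
      then show ?thesis unfolding \<rho>inv by simp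
    qed
    have \<rho>d: "\<rho> \<le> \<delta>\<^sup>2"
    proof -
      have "1 / (a/\<sigma>) \<le> 1 / (1/\<delta>\<^sup>2)" using rd dp a s by (intro divide_left_mono) auto
      then show ?thesis unfolding \<rho>inv by simp
    qed
    have sa: "\<sigma> \<le> a" using r16 a s by (simp add: field_simps)
    define t where "t = \<rho> powr (1/4)"
    have t0: "0 < t" using \<rho>0 by (simp add: t_def)
    have t4: "t^4 = \<sigma>/a"
    proof -
      have "t^4 = \<rho> powr (of_nat 4 * (1/4))" unfolding t_def using \<rho>0 by (intro powr_power) simp
      then show ?thesis using \<rho>0 a s by (simp add: \<rho>_def)
    qed
    have th: "t \<le> 1/2"
    proof -
      have q: "(1/2::real)^4 = 1/16" by (simp add: power_divide)
      have q2: "t^4 = \<rho>" using t4 by (simp add: \<rho>_def)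
      have "t^4 \<le> (1/2)^4" using q q2 \<rho>16 by linarith
      then show ?thesis using power_mono_iff[of t "1/2" 4] t0 by simp
    qed
    have td: "t\<^sup>2 \<le> \<delta>"
    proof -
      have "(t\<^sup>2)\<^sup>2 = t^4" by simp
      moreover have q2: "t^4 = \<rho>" using t4 by (simp add: \<rho>_def)
      ultimately have "(t\<^sup>2)\<^sup>2 \<le> \<delta>\<^sup>2" using \<rho>d by linarith
      then show ?thesis using power_mono_iff[of "t\<^sup>2" \<delta> 2] dp by simp
    qed
    note ME = F.main_est[OF a s sa t4 t0 th td]
    have e_eq: "t powr (F.gam/4) = \<rho> powr \<alpha>"
      unfolding t_def \<alpha>_def by (simp add: powr_powr)
    have e_half: "\<rho> powr \<alpha> \<le> \<rho> powr (\<alpha>/2)"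
      by (rule powr_mono') (use \<alpha>0 \<rho>0 \<rho>16 in auto)
    have Tfe: "(\<lambda>\<omega>. (\<lambda>(x, z, h). ln (a\<^sup>2 * h\<^sup>2 / (2 * pi * exp 1 * \<sigma>\<^sup>2)) / 2) \<omega>) = (\<lambda>\<omega>. Tf a \<sigma> (snd (snd \<omega>)))"
      by (auto simp: fun_eq_iff Tf_def split: prod.splits)
    have gfe: "(\<lambda>h. ln (h\<^sup>2 / (2 * pi * exp 1 * \<sigma>\<^sup>2)) / 2) = F.gf \<sigma>" by (simp add: F.gf_def)
    have ep: "0 \<le> \<rho> powr \<alpha>" by simp
    have C1: "(1 + F.CB)/2 * (\<rho> powr \<alpha>) \<le> C * (\<rho> powr \<alpha>)"
      by (rule mult_right_mono) (auto simp: C_def)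
    have C2: "(1/2 + F.L2 + 2*F.CB) * (\<rho> powr \<alpha>) \<le> C * (\<rho> powr (\<alpha>/2))"
    proof -
      have "(1/2 + F.L2 + 2*F.CB) * (\<rho> powr \<alpha>) \<le> C * (\<rho> powr \<alpha>)" by (rule mult_right_mono) (auto simp: C_def)
      also have "\<dots> \<le> C * (\<rho> powr (\<alpha>/2))"
      proof (rule mult_left_mono[OF e_half])
        show "0 \<le> C" by (rule C0)
      qed
      finally show ?thesis .
    qed
    show "let M = joint_law a \<sigma> f;
          i = info_rv a \<sigma>;
          I = (\<integral>\<omega>. i \<omega> \<partial>M);
          g = (\<lambda>h. ln (h\<^sup>2 / (2 * pi * exp 1 * \<sigma>\<^sup>2)) / 2)
      in integrable M i
       \<and> integrable M (\<lambda>\<omega>. (\<lambda>(x, z, h). ln (a\<^sup>2 * h\<^sup>2 / (2 * pi * exp 1 * \<sigma>\<^sup>2)) / 2) \<omega>)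
       \<and> \<bar>I - (\<integral>\<omega>. (\<lambda>(x, z, h). ln (a\<^sup>2 * h\<^sup>2 / (2 * pi * exp 1 * \<sigma>\<^sup>2)) / 2) \<omega> \<partial>M)\<bar>
            \<le> C * (\<sigma> / a) powr \<alpha>
       \<and> integrable M (\<lambda>\<omega>. (i \<omega> - I)\<^sup>2)
       \<and> integrable (law_H f) (\<lambda>h. (g h - (\<integral>h'. g h' \<partial>law_H f))\<^sup>2)
       \<and> \<bar>(\<integral>\<omega>. (i \<omega> - I)\<^sup>2 \<partial>M)
            - (1/2 + (\<integral>h. (g h - (\<integral>h'. g h' \<partial>law_H f))\<^sup>2 \<partial>law_H f))\<bar>
            \<le> C * (\<sigma> / a) powr (\<alpha> / 2)
       \<and> integrable M (\<lambda>\<omega>. \<bar>i \<omega> - I\<bar> ^ 3)"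
      unfolding Let_def Tfe gfe \<rho>_def[symmetric]
    proof (intro conjI)
      show "integrable (joint_law a \<sigma> f) (info_rv a \<sigma>)" by (rule ME(1))
      show "integrable (joint_law a \<sigma> f) (\<lambda>\<omega>. Tf a \<sigma> (snd (snd \<omega>)))" by (rule ME(2))
      show "\<bar>(\<integral>\<omega>. info_rv a \<sigma> \<omega> \<partial>joint_law a \<sigma> f) - (\<integral>\<omega>. Tf a \<sigma> (snd (snd \<omega>)) \<partial>joint_law a \<sigma> f)\<bar> \<le> C * \<rho> powr \<alpha>"
        using ME(3) C1 unfolding e_eq by linarith
      show "integrable (joint_law a \<sigma> f) (\<lambda>\<omega>. (info_rv a \<sigma> \<omega> - (\<integral>\<omega>. info_rv a \<sigma> \<omega> \<partial>joint_law a \<sigma> f))\<^sup>2)"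
        by (rule ME(4))
      show "integrable (law_H f) (\<lambda>h. (F.gf \<sigma> h - integral\<^sup>L (law_H f) (F.gf \<sigma>))\<^sup>2)"
        by (rule F.gf_facts(3)[OF s])
      show "\<bar>(\<integral>\<omega>. (info_rv a \<sigma> \<omega> - (\<integral>\<omega>. info_rv a \<sigma> \<omega> \<partial>joint_law a \<sigma> f))\<^sup>2 \<partial>joint_law a \<sigma> f)
            - (1/2 + (\<integral>h. (F.gf \<sigma> h - integral\<^sup>L (law_H f) (F.gf \<sigma>))\<^sup>2 \<partial>law_H f))\<bar> \<le> C * \<rho> powr (\<alpha>/2)"
        using ME(5) C2 unfolding e_eq by linarith
      show "integrable (joint_law a \<sigma> f) (\<lambda>\<omega>. \<bar>info_rv a \<sigma> \<omega> - (\<integral>\<omega>. info_rv a \<sigma> \<omega> \<partial>joint_law a \<sigma> f)\<bar> ^ 3)"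
        by (rule ME(6))
    qed
  qed
qed


end
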